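(* Let $q\in[0,1)$. A $\mathbb C^{n\times m}$-valued function $T$ analytic at the origin is $R_q$-cyclic if and only if there exist $N\in\mathbb N_0$ and matrices $(C_q,A_q,B_q)\in\mathbb C^{n\times N}\times\mathbb C^{N\times N}\times\mathbb C^{N\times m}$ such that, in a neighbourhood of the origin, \[ T(z)=C_q\prod_{j=0}^\infty\bigl(I_N-(1-q)zq^jA_q\bigr)^{-1}B_q . \]
   Context: For $q\in(0,1)$, $(R_qf)(z)=\frac{f(z)-f(qz)}{(1-q)z}$ (the $q$-Jackson derivative); $R_0$ is the backward shift $(R_0f)(z)=\frac{f(z)-f(0)}{z}$, $(R_0f)(0)=f'(0)$; these act entrywise. A matrix-valued function $T$ analytic at the origin is called $R_q$-cyclic if the linear span of the columns of the functions $R_q^\ell T$, $\ell=0,1,2,\ldots$, is finite dimensional. Convention $q^0=1$. *)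

theory Defs
  imports "HOL-Analysis.Analysis" "HOL-Library.Function_Algebras"
    "Jordan_Normal_Form.Gauss_Jordan_Elimination"
begin

text \<open>The q-Jackson derivative for q in (0,1) and the backward shift for q = 0,
  unified: away from 0 it is (f z - f (q z)) / ((1-q) z); at 0 it is f'(0).\<close>
definition Rq :: "real \<Rightarrow> (complex \<Rightarrow> complex) \<Rightarrow> complex \<Rightarrow> complex" where
  "Rq q f z = (if z = 0 then deriv f 0
               else (f z - f (of_real q * z)) / (of_real (1 - q) * z))"

definition Rq_mat :: "real \<Rightarrow> nat \<Rightarrow> nat \<Rightarrow> (complex \<Rightarrow> complex mat) \<Rightarrow> complex \<Rightarrow> complex mat" where
  "Rq_mat q n m T = (\<lambda>z. mat n m (\<lambda>(i, j). Rq q (\<lambda>w. T w $$ (i, j)) z))"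

definition fscale :: "complex \<Rightarrow> (complex \<Rightarrow> nat \<Rightarrow> complex) \<Rightarrow> (complex \<Rightarrow> nat \<Rightarrow> complex)" where
  "fscale c f = (\<lambda>z i. c * f z i)"

text \<open>The j-th column of the function S, seen as a C^n-valued function on the ball
  of radius r around 0 (the domain of T).\<close>
definition col_fun :: "real \<Rightarrow> nat \<Rightarrow> (complex \<Rightarrow> complex mat) \<Rightarrow> nat \<Rightarrow> complex \<Rightarrow> nat \<Rightarrow> complex" where
  "col_fun r n S j = (\<lambda>z i. if z \<in> ball 0 r \<and> i < n then S z $$ (i, j) else 0)"

text \<open>R_q-cyclicity of an n x m matrix-valued function T defined (analytic) on ball 0 r:
  the linear span of all columns of R_q^l T, l = 0,1,2,..., is finite dimensional,
  i.e. is contained in the span of a finite set.\<close>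
definition Rq_cyclic :: "real \<Rightarrow> real \<Rightarrow> nat \<Rightarrow> nat \<Rightarrow> (complex \<Rightarrow> complex mat) \<Rightarrow> bool" where
  "Rq_cyclic q r n m T =
     (\<exists>F. finite F \<and>
        {col_fun r n (((Rq_mat q n m) ^^ l) T) j | l j. j < m} \<subseteq> module.span fscale F)"

definition minv :: "complex mat \<Rightarrow> complex mat" where
  "minv F = the (mat_inverse F)"

definition qfactor :: "real \<Rightarrow> nat \<Rightarrow> complex mat \<Rightarrow> complex \<Rightarrow> nat \<Rightarrow> complex mat" where
  "qfactor q N A z j = 1\<^sub>m N - (of_real (1 - q) * z * of_real q ^ j) \<cdot>\<^sub>m A"

definition qpartial :: "real \<Rightarrow> nat \<Rightarrow> complex mat \<Rightarrow> complex \<Rightarrow> nat \<Rightarrow> complex mat" where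
  "qpartial q N A z k = foldr (\<lambda>j P. minv (qfactor q N A z j) * P) [0..<k] (1\<^sub>m N)"

definition qprod_converges_to :: "real \<Rightarrow> nat \<Rightarrow> complex mat \<Rightarrow> complex \<Rightarrow> complex mat \<Rightarrow> bool" where
  "qprod_converges_to q N A z P =
     (P \<in> carrier_mat N N \<and> (\<forall>j. invertible_mat (qfactor q N A z j)) \<and>
      (\<forall>i<N. \<forall>l<N. (\<lambda>k. qpartial q N A z k $$ (i, l)) \<longlonglongrightarrow> P $$ (i, l)))"

end

theory Submission imports Defs "HOL-Complex_Analysis.Complex_Analysis" "Jordan_Normal_Form.Determinant" begin

lemma mult_entry:
  assumes "A \<in> carrier_mat a b" "B \<in> carrier_mat b c" "i < a" "j < c"
  shows "(A * B) $$ (i, j) = (\<Sum>k<b. A $$ (i, k) * B $$ (k, j))"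
  using assms by (auto simp: scalar_prod_def atLeast0LessThan intro!: sum.cong)

definition mnorm :: "complex mat \<Rightarrow> real" where
  "mnorm X = (\<Sum>i<dim_row X. \<Sum>j<dim_col X. cmod (X $$ (i, j)))"

lemma mnorm_ge0: "mnorm X \<ge> 0"
  unfolding mnorm_def by (intro sum_nonneg) auto

lemma entry_le_mnorm:
  assumes "i < dim_row X" "j < dim_col X"
  shows "cmod (X $$ (i, j)) \<le> mnorm X"
proof -
  have "cmod (X $$ (i, j)) \<le> (\<Sum>j<dim_col X. cmod (X $$ (i, j)))"
    using assms by (intro member_le_sum) auto
  also have "\<dots> \<le> mnorm X"
    unfolding mnorm_def using assms
    by (intro member_le_sum[where f="\<lambda>i. \<Sum>j<dim_col X. cmod (X $$ (i, j))"]) (auto intro: sum_nonneg)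
  finally show ?thesis .
qed

lemma mnorm_zero_iff:
  assumes "X \<in> carrier_mat a b" "mnorm X = 0" "i < a" "j < b"
  shows "X $$ (i, j) = 0"
  using entry_le_mnorm[of i X j] assms by auto

lemma mnorm_add:
  assumes "X \<in> carrier_mat a b" "Y \<in> carrier_mat a b"
  shows "mnorm (X + Y) \<le> mnorm X + mnorm Y"
  using assms unfolding mnorm_def
  by (auto simp: sum.distrib[symmetric] intro!: sum_mono norm_triangle_ineq)

lemma mnorm_minus:
  assumes "X \<in> carrier_mat a b" "Y \<in> carrier_mat a b"
  shows "mnorm (X - Y) \<le> mnorm X + mnorm Y"
  using assms unfolding mnorm_def
  by (auto simp: sum.distrib[symmetric] intro!: sum_mono norm_triangle_ineq4)

lemma mnorm_smult: "mnorm (c \<cdot>\<^sub>m X) = cmod c * mnorm X"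
  unfolding mnorm_def by (auto simp: sum_distrib_left norm_mult intro!: sum.cong)

lemma mnorm_one: "mnorm (1\<^sub>m N) = real N"
proof -
  have "(\<Sum>j<N. cmod (1\<^sub>m N $$ (i, j))) = 1" if "i < N" for i
  proof -
    have "(\<Sum>j<N. cmod (1\<^sub>m N $$ (i, j))) = (\<Sum>j<N. if i = j then 1 else 0)"
      using that by (intro sum.cong) auto
    also have "\<dots> = 1" using that by (simp add: sum.delta)
    finally show ?thesis .
  qed
  thus ?thesis unfolding mnorm_def by simp
qed

lemma mnorm_mult:
  assumes X: "X \<in> carrier_mat a b" and Y: "Y \<in> carrier_mat b c"
  shows "mnorm (X * Y) \<le> mnorm X * mnorm Y"
proof -
  have rowY: "(\<Sum>j<c. cmod (Y $$ (k, j))) \<le> mnorm Y" if "k < b" for k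
  proof -
    have "mnorm Y = (\<Sum>i<b. \<Sum>j<c. cmod (Y $$ (i, j)))" using Y by (simp add: mnorm_def)
    thus ?thesis using that
      by (simp, intro member_le_sum[where f="\<lambda>i. \<Sum>j<c. cmod (Y $$ (i, j))"]) (auto intro: sum_nonneg)
  qed
  have "mnorm (X * Y) = (\<Sum>i<a. \<Sum>j<c. cmod (\<Sum>k<b. X $$ (i, k) * Y $$ (k, j)))"
    unfolding mnorm_def using X Y by (auto simp: mult_entry[OF X Y] simp del: index_mult_mat(1) intro!: sum.cong)
  also have "\<dots> \<le> (\<Sum>i<a. \<Sum>j<c. \<Sum>k<b. cmod (X $$ (i, k)) * cmod (Y $$ (k, j)))"
    by (intro sum_mono) (auto intro: order.trans[OF norm_sum] simp: norm_mult)
  also have "\<dots> = (\<Sum>i<a. \<Sum>k<b. cmod (X $$ (i, k)) * (\<Sum>j<c. cmod (Y $$ (k, j))))"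
    by (simp add: sum.swap[of _ "{..<c}"] sum_distrib_left)
  also have "\<dots> \<le> (\<Sum>i<a. \<Sum>k<b. cmod (X $$ (i, k)) * mnorm Y)"
    by (intro sum_mono mult_left_mono rowY) auto
  also have "\<dots> = mnorm X * mnorm Y"
    unfolding mnorm_def using X by (simp add: sum_distrib_right)
  finally show ?thesis .
qed

lemma minv_inv:
  assumes A: "A \<in> carrier_mat N N" and d: "Determinant.det A \<noteq> 0"
  shows "A * minv A = 1\<^sub>m N" "minv A * A = 1\<^sub>m N" "minv A \<in> carrier_mat N N"
proof -
  have U: "A \<in> Units (ring_mat TYPE(complex) N ())" by (rule det_non_zero_imp_unit[OF A d])
  have "mat_inverse A \<noteq> None" using mat_inverse(1)[OF A, of "()"] U by auto
  then obtain B where B: "mat_inverse A = Some B" by auto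
  have "minv A = B" unfolding minv_def B by simp
  thus "A * minv A = 1\<^sub>m N" "minv A * A = 1\<^sub>m N" "minv A \<in> carrier_mat N N"
    using mat_inverse(2)[OF A B] by auto
qed

lemma det_right_inv:
  assumes A: "A \<in> carrier_mat N N" and B: "B \<in> carrier_mat N N" and AB: "A * B = 1\<^sub>m N"
  shows "Determinant.det A \<noteq> 0"
proof -
  have "Determinant.det A * Determinant.det B = 1" using arg_cong[OF AB, of Determinant.det] det_mult[OF A B] det_one by simp
  thus ?thesis by auto
qed

lemma invertible_det:
  assumes A: "A \<in> carrier_mat N N" and inv: "invertible_mat A"
  shows "Determinant.det A \<noteq> 0"
proof -
  obtain B where AB: "A * B = 1\<^sub>m (dim_row A)" and BA: "B * A = 1\<^sub>m (dim_row B)"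
    using inv unfolding invertible_mat_def inverts_mat_def by auto
  have "dim_col B = N" using arg_cong[OF AB, of dim_col] A by simp
  moreover have "dim_row B = N" using arg_cong[OF BA, of dim_col] A by simp
  ultimately have B: "B \<in> carrier_mat N N" by auto
  show ?thesis using det_right_inv[OF A B] AB A by simp
qed

lemma invertibleI:
  assumes A: "A \<in> carrier_mat N N" and B: "B \<in> carrier_mat N N"
    and "A * B = 1\<^sub>m N" "B * A = 1\<^sub>m N"
  shows "invertible_mat A"
  using assms unfolding invertible_mat_def inverts_mat_def square_mat.simps by auto

lemma factor_props:
  assumes A: "A \<in> carrier_mat N N" and small: "cmod c * mnorm A \<le> 1/2"
    and F_def: "F = 1\<^sub>m N - c \<cdot>\<^sub>m A"
  shows "Determinant.det F \<noteq> 0"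
    "F * minv F = 1\<^sub>m N"
    "minv F * F = 1\<^sub>m N"
    "minv F \<in> carrier_mat N N"
    "mnorm (minv F) \<le> 2 * real N"
    "mnorm (minv F - 1\<^sub>m N) \<le> 2 * real N * cmod c * mnorm A"
proof -
  have F: "F \<in> carrier_mat N N" using A by (simp add: F_def minus_carrier_mat)
  have FX: "F * X = X - c \<cdot>\<^sub>m (A * X)" if X: "X \<in> carrier_mat N N" for X
    unfolding F_def using A X
    by (simp add: minus_mult_distrib_mat[of "1\<^sub>m N" N N "c \<cdot>\<^sub>m A" X N] mult_smult_assoc_mat)
  have cA: "cmod c * mnorm A \<ge> 0" using mnorm_ge0 by simp
  show d: "Determinant.det F \<noteq> 0"
  proof
    assume "Determinant.det F = 0"
    then obtain v where v: "v \<in> carrier_vec N" "v \<noteq> 0\<^sub>v N" "F *\<^sub>v v = 0\<^sub>v N"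
      using det_0_iff_vec_prod_zero[OF F] by auto
    define X where "X = mat N N (\<lambda>(i, j). vec_index v i)"
    have X: "X \<in> carrier_mat N N" by (simp add: X_def)
    have "F * X = 0\<^sub>m N N"
    proof (rule eq_matI)
      fix i j assume ij: "i < dim_row (0\<^sub>m N N :: complex mat)" "j < dim_col (0\<^sub>m N N :: complex mat)"
      have "(F * X) $$ (i, j) = (\<Sum>k<N. F $$ (i, k) * vec_index v k)"
        using ij unfolding mult_entry[OF F X, of i j, OF ij[simplified]] by (simp add: X_def)
      also have "\<dots> = vec_index (F *\<^sub>v v) i" using ij F v(1) by (auto simp: scalar_prod_def atLeast0LessThan intro!: sum.cong)
      also have "\<dots> = 0" using v(3) ij by simp
      finally show "(F * X) $$ (i, j) = 0\<^sub>m N N $$ (i, j)" using ij by simp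
    qed (use F X in auto)
    hence e0: "X - c \<cdot>\<^sub>m (A * X) = 0\<^sub>m N N" using FX[OF X] by simp
    have e: "(X - c \<cdot>\<^sub>m (A * X)) $$ (i, j) = 0\<^sub>m N N $$ (i, j)" for i j by (simp add: e0)
    have eqX: "X = c \<cdot>\<^sub>m (A * X)"
    proof (rule eq_matI)
      fix i j assume ij: "i < dim_row (c \<cdot>\<^sub>m (A * X))" "j < dim_col (c \<cdot>\<^sub>m (A * X))"
      show "X $$ (i, j) = (c \<cdot>\<^sub>m (A * X)) $$ (i, j)"
        using e[of i j] ij A X by simp
    qed (use A X in auto)
    have "mnorm X \<le> cmod c * (mnorm A * mnorm X)"
      by (subst eqX) (simp add: mnorm_smult mult_left_mono mnorm_mult[OF A X])
    also have "\<dots> \<le> 1/2 * mnorm X" using mult_right_mono[OF small mnorm_ge0[of X]]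
      by (simp add: ac_simps)
    finally have "mnorm X = 0" using mnorm_ge0[of X] by simp
    hence "vec_index v i = 0" if "i < N" for i
      using mnorm_zero_iff[OF X _ that that] that by (simp add: X_def)
    hence "v = 0\<^sub>v N" using v(1) by (intro eq_vecI) auto
    thus False using v(2) by simp
  qed
  note M = minv_inv[OF F d]
  show "F * minv F = 1\<^sub>m N" "minv F * F = 1\<^sub>m N" "minv F \<in> carrier_mat N N" using M by auto
  define Mi where "Mi = minv F"
  have Mi: "Mi \<in> carrier_mat N N" using M by (simp add: Mi_def)
  have e0: "Mi - c \<cdot>\<^sub>m (A * Mi) = 1\<^sub>m N" using FX[OF Mi] M by (simp add: Mi_def)
  have e: "(Mi - c \<cdot>\<^sub>m (A * Mi)) $$ (i, j) = 1\<^sub>m N $$ (i, j)" for i j by (simp add: e0)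
  have eqM: "Mi - 1\<^sub>m N = c \<cdot>\<^sub>m (A * Mi)"
  proof (rule eq_matI)
    fix i j assume ij: "i < dim_row (c \<cdot>\<^sub>m (A * Mi))" "j < dim_col (c \<cdot>\<^sub>m (A * Mi))"
    show "(Mi - 1\<^sub>m N) $$ (i, j) = (c \<cdot>\<^sub>m (A * Mi)) $$ (i, j)"
      using e[of i j] ij A Mi by (simp add: algebra_simps)
  qed (use A Mi in auto)
  have eqM2: "Mi = 1\<^sub>m N + c \<cdot>\<^sub>m (A * Mi)"
  proof (rule eq_matI)
    fix i j assume ij: "i < dim_row (1\<^sub>m N + c \<cdot>\<^sub>m (A * Mi))" "j < dim_col (1\<^sub>m N + c \<cdot>\<^sub>m (A * Mi))"
    show "Mi $$ (i, j) = (1\<^sub>m N + c \<cdot>\<^sub>m (A * Mi)) $$ (i, j)"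
      using e[of i j] ij A Mi by (simp add: algebra_simps)
  qed (use A Mi in auto)
  have AM: "A * Mi \<in> carrier_mat N N" using A Mi by simp
  have "mnorm Mi \<le> mnorm (1\<^sub>m N) + mnorm (c \<cdot>\<^sub>m (A * Mi))"
    by (subst eqM2) (rule mnorm_add, use AM in auto)
  also have "\<dots> \<le> N + cmod c * (mnorm A * mnorm Mi)"
    by (simp add: mnorm_one mnorm_smult mult_left_mono mnorm_mult[OF A Mi])
  also have "\<dots> \<le> N + 1/2 * mnorm Mi" using mult_right_mono[OF small mnorm_ge0[of Mi]]
    by (simp add: ac_simps)
  finally have bM: "mnorm Mi \<le> 2 * real N" by simp
  thus "mnorm (minv F) \<le> 2 * real N" by (simp add: Mi_def)
  have "mnorm (Mi - 1\<^sub>m N) = cmod c * mnorm (A * Mi)" by (simp add: eqM mnorm_smult)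
  also have "\<dots> \<le> cmod c * (mnorm A * mnorm Mi)"
    by (simp add: mult_left_mono mnorm_mult[OF A Mi])
  also have "\<dots> \<le> cmod c * (mnorm A * (2 * real N))"
    using bM mnorm_ge0[of A] by (intro mult_left_mono) auto
  finally show "mnorm (minv F - 1\<^sub>m N) \<le> 2 * real N * cmod c * mnorm A"
    by (simp add: Mi_def algebra_simps)
qed

lemma prod_conv:
  fixes Q E :: "nat \<Rightarrow> complex mat" and e :: "nat \<Rightarrow> real"
  assumes Q: "\<And>k. Q k \<in> carrier_mat N N" and E: "\<And>k. E k \<in> carrier_mat N N"
    and rec: "\<And>k. Q (Suc k) = Q k * (1\<^sub>m N + E k)"
    and bnd: "\<And>k. mnorm (E k) \<le> e k" and se: "summable e"
  shows "\<exists>P \<in> carrier_mat N N. (\<forall>i<N. \<forall>l<N. (\<lambda>k. Q k $$ (i, l)) \<longlonglongrightarrow> P $$ (i, l)) \<and>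
           (\<forall>i<N. \<forall>l<N. cmod (P $$ (i, l) - Q 0 $$ (i, l)) \<le> mnorm (Q 0) * exp (suminf e) * suminf e)"
proof -
  have e0: "e k \<ge> 0" for k using bnd[of k] mnorm_ge0[of "E k"] by simp
  define M where "M = mnorm (Q 0) * exp (suminf e)"
  have D: "Q (Suc k) - Q k = Q k * E k" for k
  proof -
    have "Q (Suc k) = Q k + Q k * E k" using rec[of k] Q[of k] E[of k]
      by (simp add: mult_add_distrib_mat[OF Q[of k] one_carrier_mat E[of k]])
    thus ?thesis using Q[of k] E[of k]
      by (intro eq_matI) auto
  qed
  have step: "mnorm (Q (Suc k)) \<le> mnorm (Q k) * (1 + e k)" for k
  proof -
    have "Q (Suc k) = Q k + Q k * E k" using rec[of k] Q[of k] E[of k]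
      by (simp add: mult_add_distrib_mat[OF Q[of k] one_carrier_mat E[of k]])
    hence "mnorm (Q (Suc k)) \<le> mnorm (Q k) + mnorm (Q k * E k)"
      using mnorm_add[of "Q k" N N "Q k * E k"] Q[of k] E[of k] by simp
    also have "\<dots> \<le> mnorm (Q k) + mnorm (Q k) * e k"
      using mnorm_mult[OF Q E[of k]] bnd[of k] mnorm_ge0[of "Q k"]
      by (smt (verit) mult_left_mono)
    finally show ?thesis by (simp add: algebra_simps)
  qed
  have bk: "mnorm (Q k) \<le> mnorm (Q 0) * exp (\<Sum>j<k. e j)" for k
  proof (induction k)
    case 0 thus ?case by simp
  next
    case (Suc k)
    have "mnorm (Q (Suc k)) \<le> mnorm (Q k) * (1 + e k)" by (rule step)
    also have "\<dots> \<le> mnorm (Q 0) * exp (\<Sum>j<k. e j) * exp (e k)"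
      using Suc e0[of k] mnorm_ge0[of "Q k"] exp_ge_add_one_self[of "e k"]
      by (intro mult_mono) (auto simp: add.commute)
    finally show ?case by (simp add: exp_add mult.assoc)
  qed
  have bQ: "mnorm (Q k) \<le> M" for k
  proof -
    have "(\<Sum>j<k. e j) \<le> suminf e" using se e0 by (intro sum_le_suminf) auto
    hence "mnorm (Q 0) * exp (\<Sum>j<k. e j) \<le> M"
      unfolding M_def using mnorm_ge0[of "Q 0"] by (intro mult_left_mono) auto
    thus ?thesis using bk[of k] by simp
  qed
  have M0: "M \<ge> 0" unfolding M_def using mnorm_ge0 by simp
  have bD: "cmod (Q (Suc j) $$ (i, l) - Q j $$ (i, l)) \<le> M * e j" if "i < N" "l < N" for i l j
  proof -
    have "cmod (Q (Suc j) $$ (i, l) - Q j $$ (i, l)) = cmod ((Q (Suc j) - Q j) $$ (i, l))"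
      using that Q[of j] Q[of "Suc j"] by simp
    also have "\<dots> \<le> mnorm (Q (Suc j) - Q j)"
      using that Q[of j] by (intro entry_le_mnorm) auto
    also have "\<dots> \<le> mnorm (Q j) * mnorm (E j)" unfolding D by (rule mnorm_mult[OF Q E])
    also have "\<dots> \<le> M * e j" using bQ[of j] bnd[of j] mnorm_ge0 M0
      by (intro mult_mono) auto
    finally show ?thesis .
  qed
  have tele: "Q k $$ (i, l) = Q 0 $$ (i, l) + (\<Sum>j<k. Q (Suc j) $$ (i, l) - Q j $$ (i, l))" for k i l
    using sum_lessThan_telescope[of "\<lambda>j. Q j $$ (i, l)" k] by simp
  have summ: "summable (\<lambda>j. Q (Suc j) $$ (i, l) - Q j $$ (i, l))" if "i < N" "l < N" for i l
    by (rule summable_norm_cancel, rule summable_comparison_test[where g="\<lambda>j. M * e j"])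
       (use bD[OF that] se in \<open>auto intro: summable_mult\<close>)
  define P where "P = mat N N (\<lambda>(i, l). Q 0 $$ (i, l) + (\<Sum>j. Q (Suc j) $$ (i, l) - Q j $$ (i, l)))"
  have lim: "(\<lambda>k. Q k $$ (i, l)) \<longlonglongrightarrow> P $$ (i, l)" if "i < N" "l < N" for i l
  proof -
    have eqf: "(\<lambda>k. Q k $$ (i, l)) = (\<lambda>k. Q 0 $$ (i, l) + (\<Sum>j<k. Q (Suc j) $$ (i, l) - Q j $$ (i, l)))"
      by (rule ext, rule tele)
    show ?thesis unfolding eqf P_def using that
      by (simp, intro tendsto_add tendsto_const summable_LIMSEQ summ)
  qed
  have bP: "cmod (P $$ (i, l) - Q 0 $$ (i, l)) \<le> M * suminf e" if "i < N" "l < N" for i l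
  proof (rule LIMSEQ_le_const2)
    show "(\<lambda>k. cmod (Q k $$ (i, l) - Q 0 $$ (i, l))) \<longlonglongrightarrow> cmod (P $$ (i, l) - Q 0 $$ (i, l))"
      by (intro tendsto_norm tendsto_diff lim that tendsto_const)
    show "\<exists>N. \<forall>k\<ge>N. cmod (Q k $$ (i, l) - Q 0 $$ (i, l)) \<le> M * suminf e"
    proof (intro exI allI impI)
      fix k :: nat
      have "cmod (Q k $$ (i, l) - Q 0 $$ (i, l)) = cmod (\<Sum>j<k. Q (Suc j) $$ (i, l) - Q j $$ (i, l))"
        using sum_lessThan_telescope[of "\<lambda>j. Q j $$ (i, l)" k] by simp
      also have "\<dots> \<le> (\<Sum>j<k. M * e j)" by (rule order.trans[OF norm_sum sum_mono[OF bD[OF that]]])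
      also have "\<dots> \<le> M * suminf e" unfolding sum_distrib_left[symmetric]
        using M0 se e0 by (intro mult_left_mono sum_le_suminf) auto
      finally show "cmod (Q k $$ (i, l) - Q 0 $$ (i, l)) \<le> M * suminf e" .
    qed
  qed
  show ?thesis
    by (rule bexI[of _ P]) (use lim bP in \<open>auto simp: M_def P_def\<close>)
qed

lemma foldr_mult_carrier:
  fixes g :: "nat \<Rightarrow> complex mat"
  assumes "\<And>j. j \<in> set xs \<Longrightarrow> g j \<in> carrier_mat N N" "X \<in> carrier_mat N N"
  shows "foldr (\<lambda>j P. g j * P) xs X \<in> carrier_mat N N"
  using assms by (induction xs) (auto intro!: mult_carrier_mat)

lemma foldr_mult_right:
  fixes g :: "nat \<Rightarrow> complex mat"
  assumes "\<And>j. j \<in> set xs \<Longrightarrow> g j \<in> carrier_mat N N" "X \<in> carrier_mat N N"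
  shows "foldr (\<lambda>j P. g j * P) xs X = foldr (\<lambda>j P. g j * P) xs (1\<^sub>m N) * X"
  using assms
proof (induction xs)
  case Nil
  have "1\<^sub>m N * X = X" by (metis left_mult_one_mat Nil(2))
  thus ?case by simp
next
  case (Cons a xs)
  have ga: "g a \<in> carrier_mat N N" using Cons.prems by simp
  have c: "foldr (\<lambda>j P. g j * P) xs (1\<^sub>m N) \<in> carrier_mat N N"
    by (rule foldr_mult_carrier) (use Cons.prems in auto)
  have ih: "foldr (\<lambda>j P. g j * P) xs X = foldr (\<lambda>j P. g j * P) xs (1\<^sub>m N) * X"
    by (rule Cons.IH) (use Cons.prems in auto)
  have "foldr (\<lambda>j P. g j * P) (a # xs) X = g a * (foldr (\<lambda>j P. g j * P) xs (1\<^sub>m N) * X)"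
    by (simp only: foldr_Cons o_apply ih)
  also have "\<dots> = (g a * foldr (\<lambda>j P. g j * P) xs (1\<^sub>m N)) * X"
    using ga c Cons.prems(2) by (simp only: assoc_mult_mat)
  also have "\<dots> = foldr (\<lambda>j P. g j * P) (a # xs) (1\<^sub>m N) * X"
    by (simp only: foldr_Cons o_apply)
  finally show ?case .
qed

lemma qpartial_carrier:
  assumes "\<And>j. j < k \<Longrightarrow> minv (qfactor q N A z j) \<in> carrier_mat N N"
  shows "qpartial q N A z k \<in> carrier_mat N N"
  unfolding qpartial_def by (rule foldr_mult_carrier) (use assms in auto)

lemma qpartial_Suc_right:
  assumes "\<And>j. j \<le> k \<Longrightarrow> minv (qfactor q N A z j) \<in> carrier_mat N N"
  shows "qpartial q N A z (Suc k) = qpartial q N A z k * minv (qfactor q N A z k)"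
proof -
  have "qpartial q N A z (Suc k) =
        foldr (\<lambda>j P. minv (qfactor q N A z j) * P) [0..<k] (minv (qfactor q N A z k) * 1\<^sub>m N)"
    unfolding qpartial_def by simp
  also have "\<dots> = foldr (\<lambda>j P. minv (qfactor q N A z j) * P) [0..<k] (minv (qfactor q N A z k))"
    using assms[of k] by simp
  also have "\<dots> = qpartial q N A z k * minv (qfactor q N A z k)"
    unfolding qpartial_def by (rule foldr_mult_right) (use assms in auto)
  finally show ?thesis .
qed

lemma qfactor_shift: "qfactor q N A z (Suc j) = qfactor q N A (of_real q * z) j"
  unfolding qfactor_def by (simp add: ac_simps)

lemma qpartial_Suc_left:
  "qpartial q N A z (Suc k) = minv (qfactor q N A z 0) * qpartial q N A (of_real q * z) k"
proof -
  have "[0..<Suc k] = 0 # map Suc [0..<k]" by (simp add: map_Suc_upt upt_conv_Cons)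
  thus ?thesis unfolding qpartial_def by (simp add: foldr_map o_def qfactor_shift)
qed

lemma qfactor_eq: "qfactor q N A z j = 1\<^sub>m N - (of_real (1 - q) * z * of_real q ^ j) \<cdot>\<^sub>m A"
  by (simp add: qfactor_def)

lemma cmod_coef:
  assumes "0 \<le> q" "q < 1"
  shows "cmod (of_real (1 - q) * z * of_real q ^ j) \<le> cmod z * q ^ j"
proof -
  have h: "cmod (complex_of_real (1 - q)) = 1 - q"
    by (simp only: norm_of_real) (use assms in simp)
  have "cmod (of_real (1 - q) * z * of_real q ^ j) = (1 - q) * cmod z * q ^ j"
    using assms by (simp only: norm_mult norm_power h norm_of_real)
  also have "\<dots> \<le> cmod z * q ^ j" using assms
    by (intro mult_right_mono mult_left_le_one_le) auto
  finally show ?thesis .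
qed

lemma qprod_conv:
  assumes A: "A \<in> carrier_mat N N" and q: "0 \<le> q" "q < 1"
    and small: "cmod z * mnorm A \<le> 1/2"
  shows "\<exists>P. qprod_converges_to q N A z P \<and>
    (\<forall>i<N. \<forall>l<N. cmod (P $$ (i, l) - 1\<^sub>m N $$ (i, l)) \<le>
        real N * exp (2 * real N * cmod z * mnorm A / (1 - q)) * (2 * real N * cmod z * mnorm A / (1 - q)))"
proof -
  define c where "c j = of_real (1 - q) * z * of_real q ^ j" for j
  have smallj: "cmod (c j) * mnorm A \<le> 1/2" for j
  proof -
    have "cmod (c j) \<le> cmod z"
    proof -
      have "q ^ j \<le> 1" using q power_le_one[of q j] by simp
      hence "cmod z * q ^ j \<le> cmod z" by (simp add: mult_left_le)
      thus ?thesis using cmod_coef[OF q, of z j] by (simp add: c_def)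
    qed
    hence "cmod (c j) * mnorm A \<le> cmod z * mnorm A" using mnorm_ge0 by (intro mult_right_mono) auto
    thus ?thesis using small by simp
  qed
  note fp = factor_props[OF A smallj qfactor_eq[of q N A z, folded c_def]]
  define e where "e j = 2 * real N * cmod z * mnorm A * q ^ j" for j
  have se: "summable e" unfolding e_def using q by (intro summable_mult summable_geometric) auto
  have sume: "suminf e = 2 * real N * cmod z * mnorm A / (1 - q)"
    unfolding e_def using q by (simp add: suminf_mult suminf_geometric)
  have bE: "mnorm (minv (qfactor q N A z k) - 1\<^sub>m N) \<le> e k" for k
  proof -
    have "mnorm (minv (qfactor q N A z k) - 1\<^sub>m N) \<le> 2 * real N * cmod (c k) * mnorm A" by (rule fp(6))
    also have "\<dots> \<le> 2 * real N * (cmod z * q ^ k) * mnorm A"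
      using cmod_coef[OF q, of z k] mnorm_ge0[of A] unfolding c_def
      by (intro mult_right_mono mult_left_mono) auto
    finally show ?thesis by (simp add: e_def ac_simps)
  qed
  have Qc: "qpartial q N A z k \<in> carrier_mat N N" for k
    by (rule qpartial_carrier) (use fp(4) in auto)
  have rec: "qpartial q N A z (Suc k) = qpartial q N A z k * (1\<^sub>m N + (minv (qfactor q N A z k) - 1\<^sub>m N))" for k
  proof -
    have "1\<^sub>m N + (minv (qfactor q N A z k) - 1\<^sub>m N) = minv (qfactor q N A z k)"
      using fp(4)[of k] by (intro eq_matI) auto
    thus ?thesis using qpartial_Suc_right[of k q N A z] fp(4) by simp
  qed
  have ex: "\<exists>P \<in> carrier_mat N N. (\<forall>i<N. \<forall>l<N. (\<lambda>k. qpartial q N A z k $$ (i, l)) \<longlonglongrightarrow> P $$ (i, l)) \<and>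
    (\<forall>i<N. \<forall>l<N. cmod (P $$ (i, l) - qpartial q N A z 0 $$ (i, l)) \<le>
        mnorm (qpartial q N A z 0) * exp (suminf e) * suminf e)"
    by (rule prod_conv[OF Qc _ rec bE se]) (rule minus_carrier_mat, simp)
  obtain P where P: "P \<in> carrier_mat N N"
    "\<forall>i<N. \<forall>l<N. (\<lambda>k. qpartial q N A z k $$ (i, l)) \<longlonglongrightarrow> P $$ (i, l)"
    "\<forall>i<N. \<forall>l<N. cmod (P $$ (i, l) - qpartial q N A z 0 $$ (i, l)) \<le>
        mnorm (qpartial q N A z 0) * exp (suminf e) * suminf e"
    using ex by blast
  have q0: "qpartial q N A z 0 = 1\<^sub>m N" by (simp add: qpartial_def)
  have inv: "invertible_mat (qfactor q N A z j)" for j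
    using invertibleI[OF _ fp(4) fp(2) fp(3)] A by (simp add: qfactor_def minus_carrier_mat)
  have "qprod_converges_to q N A z P" unfolding qprod_converges_to_def using P(1,2) inv by blast
  moreover have "\<forall>i<N. \<forall>l<N. cmod (P $$ (i, l) - 1\<^sub>m N $$ (i, l)) \<le>
        real N * exp (2 * real N * cmod z * mnorm A / (1 - q)) * (2 * real N * cmod z * mnorm A / (1 - q))"
    using P(3) unfolding q0 mnorm_one sume .
  ultimately show ?thesis by blast
qed

lemma qball:
  assumes "z \<in> ball 0 r" "0 \<le> q" "q < 1"
  shows "of_real q * z \<in> ball (0::complex) r"
proof -
  have "cmod (of_real q * z) = q * cmod z" using assms by (simp add: norm_mult)
  also have "\<dots> \<le> cmod z" using assms by (intro mult_left_le_one_le) auto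
  finally show ?thesis using assms by auto
qed

lemma comp_q_holo:
  assumes hol: "f holomorphic_on ball 0 r" and q: "0 \<le> q" "q < 1"
  shows "(\<lambda>z. f (of_real q * z)) holomorphic_on ball 0 r"
proof -
  have "(f \<circ> (\<lambda>z. of_real q * z)) holomorphic_on ball 0 r"
    by (rule holomorphic_on_compose_gen[where t="ball 0 r"]) (use qball[OF _ q] hol in \<open>auto intro: holomorphic_intros\<close>)
  thus ?thesis by (simp add: o_def)
qed

lemma Rq_holo:
  assumes hol: "f holomorphic_on ball 0 r" and q: "0 \<le> q" "q < 1" and r: "r > 0"
  shows "Rq q f holomorphic_on ball 0 r"
proof -
  define h where "h z = f z - f (of_real q * z)" for z
  have hh: "h holomorphic_on ball 0 r" unfolding h_def
    by (intro holomorphic_intros hol comp_q_holo[OF hol q])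
  have 0: "0 \<in> ball (0::complex) r" using r by simp
  have df: "(f has_field_derivative deriv f 0) (at 0)" by (rule holomorphic_derivI[OF hol open_ball 0])
  have df0: "(f has_field_derivative deriv f 0) (at (of_real q * 0))" using df by simp
  have dg: "((\<lambda>z. of_real q * z) has_field_derivative of_real q) (at (0::complex))"
    by (auto intro!: derivative_eq_intros)
  have dfq: "((\<lambda>z. f (of_real q * z)) has_field_derivative deriv f 0 * of_real q) (at 0)"
    by (rule DERIV_chain2[OF df0 dg])
  have "(h has_field_derivative deriv f 0 - deriv f 0 * of_real q) (at 0)"
    unfolding h_def by (rule DERIV_diff[OF df dfq])
  hence dh: "deriv h 0 = (1 - of_real q) * deriv f 0" by (simp add: DERIV_imp_deriv algebra_simps)
  define H where "H z = (if z = 0 then deriv h 0 else (h z - h 0) / (z - 0))" for z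
  have HH: "H holomorphic_on ball 0 r" unfolding H_def using pole_lemma_open[OF hh open_ball, of 0] by simp
  have nz: "(1 - complex_of_real q) \<noteq> 0"
  proof
    assume "1 - complex_of_real q = 0"
    hence "complex_of_real q = complex_of_real 1" by simp
    hence "q = 1" by (simp only: of_real_eq_iff)
    thus False using q by simp
  qed
  have "(\<lambda>z. H z / (1 - of_real q)) holomorphic_on ball 0 r"
    using HH nz by (intro holomorphic_intros) auto
  moreover have "H z / (1 - of_real q) = Rq q f z" for z
  proof (cases "z = 0")
    case True thus ?thesis using nz by (simp add: H_def Rq_def dh)
  next
    case False thus ?thesis using nz by (simp add: H_def Rq_def h_def field_simps)
  qed
  ultimately show ?thesis by simp
qed

lemma Rq_local:
  assumes eq: "\<And>w. w \<in> ball 0 r \<Longrightarrow> f w = g w" and z: "z \<in> ball 0 r" and q: "0 \<le> q" "q < 1"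
  shows "Rq q f z = Rq q g z"
proof (cases "z = 0")
  case True
  have "eventually (\<lambda>w. w \<in> ball 0 r) (nhds (0::complex))"
    using z True by (intro eventually_nhds_in_open) auto
  hence "eventually (\<lambda>w. f w = g w) (nhds 0)" by eventually_elim (use eq in auto)
  hence "deriv f 0 = deriv g 0" by (rule deriv_cong_ev) simp
  thus ?thesis using True by (simp add: Rq_def)
next
  case False
  thus ?thesis using eq z qball[OF z q] by (simp add: Rq_def)
qed

lemma Rq_lin:
  assumes hf: "f holomorphic_on ball 0 r" and hg: "g holomorphic_on ball 0 r"
    and z: "z \<in> ball 0 r"
  shows "Rq q (\<lambda>w. c * f w + g w) z = c * Rq q f z + Rq q g z"
proof (cases "z = 0")
  case True
  have "f field_differentiable (at 0)" "g field_differentiable (at 0)"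
    using holomorphic_on_imp_differentiable_at[OF hf open_ball] holomorphic_on_imp_differentiable_at[OF hg open_ball]
      z True by auto
  hence "deriv (\<lambda>w. c * f w + g w) 0 = c * deriv f 0 + deriv g 0"
    by (subst deriv_add) (auto intro: field_differentiable_mult field_differentiable_const)
  thus ?thesis using True by (simp add: Rq_def)
next
  case False
  have e: "(c * f z + g z - (c * f (of_real q * z) + g (of_real q * z))) =
     c * (f z - f (of_real q * z)) + (g z - g (of_real q * z))" by (simp add: algebra_simps)
  show ?thesis unfolding Rq_def if_not_P[OF False] e by (simp add: add_divide_distrib)
qed

lemma Rq_zero: "Rq q (\<lambda>w. 0) z = 0"
  by (simp add: Rq_def)

interpretation fs: vector_space fscale
  by unfold_locales (auto simp: fscale_def fun_eq_iff algebra_simps)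

lemma fscale_apply [simp]: "fscale c f z i = c * f z i"
  by (simp add: fscale_def)

lemma sum_fun_apply2: "(sum f K) z i = (\<Sum>k\<in>K. f k z i)"
  by (induction K rule: infinite_finite_induct) auto

abbreviation Sit :: "real \<Rightarrow> nat \<Rightarrow> nat \<Rightarrow> (complex \<Rightarrow> complex mat) \<Rightarrow> nat \<Rightarrow> complex \<Rightarrow> complex mat" where
  "Sit q n m T l \<equiv> ((Rq_mat q n m) ^^ l) T"

lemma Sit_Suc_entry:
  assumes "i < n" "j < m"
  shows "Sit q n m T (Suc l) z $$ (i, j) = Rq q (\<lambda>w. Sit q n m T l w $$ (i, j)) z"
  using assms by (simp add: Rq_mat_def)

lemma Sit_holo:
  assumes q: "0 \<le> q" "q < 1" and r: "r > 0"
    and analytic: "\<forall>i<n. \<forall>j<m. (\<lambda>z. T z $$ (i, j)) holomorphic_on ball 0 r"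
  shows "\<forall>i<n. \<forall>j<m. (\<lambda>z. Sit q n m T l z $$ (i, j)) holomorphic_on ball 0 r"
proof (induction l)
  case 0 thus ?case using analytic by simp
next
  case (Suc l)
  show ?case
  proof (intro allI impI)
    fix i j assume ij: "i < n" "j < m"
    have "Rq q (\<lambda>w. Sit q n m T l w $$ (i, j)) holomorphic_on ball 0 r"
      using Suc ij by (intro Rq_holo q r) auto
    thus "(\<lambda>z. Sit q n m T (Suc l) z $$ (i, j)) holomorphic_on ball 0 r"
      using Sit_Suc_entry[OF ij] by simp
  qed
qed

definition Cols :: "real \<Rightarrow> real \<Rightarrow> nat \<Rightarrow> nat \<Rightarrow> (complex \<Rightarrow> complex mat) \<Rightarrow> (complex \<Rightarrow> nat \<Rightarrow> complex) set" where
  "Cols q r n m T = {col_fun r n (Sit q n m T l) j | l j. j < m}"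

lemma Rq_cyclic_Cols: "Rq_cyclic q r n m T \<longleftrightarrow> (\<exists>F. finite F \<and> Cols q r n m T \<subseteq> fs.span F)"
  unfolding Rq_cyclic_def Cols_def by simp

definition good :: "real \<Rightarrow> nat \<Rightarrow> (complex \<Rightarrow> nat \<Rightarrow> complex) \<Rightarrow> bool" where
  "good r n g \<longleftrightarrow> (\<forall>i<n. (\<lambda>z. g z i) holomorphic_on ball 0 r) \<and> (\<forall>z i. (z \<notin> ball 0 r \<or> \<not> i < n) \<longrightarrow> g z i = 0)"

lemma span_good:
  assumes q: "0 \<le> q" "q < 1" and r: "r > 0"
    and analytic: "\<forall>i<n. \<forall>j<m. (\<lambda>z. T z $$ (i, j)) holomorphic_on ball 0 r"
    and g: "g \<in> fs.span (Cols q r n m T)"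
  shows "good r n g"
  using g
proof (induction rule: fs.span_induct_alt)
  case base thus ?case by (simp add: good_def)
next
  case (step c x y)
  then obtain l j where x: "x = col_fun r n (Sit q n m T l) j" "j < m" unfolding Cols_def by auto
  have hx: "(\<lambda>z. x z i) holomorphic_on ball 0 r" if "i < n" for i
  proof -
    have "(\<lambda>z. Sit q n m T l z $$ (i, j)) holomorphic_on ball 0 r"
      using Sit_holo[OF q r analytic] that x(2) by auto
    thus ?thesis by (rule holomorphic_transform) (use that in \<open>auto simp: x col_fun_def\<close>)
  qed
  have "(\<lambda>z. c * x z i + y z i) holomorphic_on ball 0 r" if "i < n" for i
    using hx[OF that] step(2) that unfolding good_def by (auto intro!: holomorphic_intros)
  moreover have "(\<forall>z i. (z \<notin> ball 0 r \<or> \<not> i < n) \<longrightarrow> c * x z i + y z i = 0)"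
    using step(2) unfolding good_def by (auto simp: x col_fun_def)
  ultimately show ?case unfolding good_def by simp
qed

lemma good_zero:
  assumes g: "good r n g" and e: "0 < e" "e \<le> r" and z: "\<And>z i. z \<in> ball 0 e \<Longrightarrow> i < n \<Longrightarrow> g z i = 0"
  shows "g = 0"
proof -
  have "g z i = 0" for z i
  proof (cases "z \<in> ball 0 r \<and> i < n")
    case True
    show "g z i = 0"
    proof (rule analytic_continuation[where f="\<lambda>z. g z i" and S="ball 0 r" and U="ball 0 e" and \<xi>=0])
      show "(\<lambda>z. g z i) holomorphic_on ball 0 r" using g True unfolding good_def by auto
      show "ball (0::complex) e \<subseteq> ball 0 r" using e by auto
      show "(0::complex) \<in> ball 0 r" using e by auto
      show "(0::complex) islimpt ball 0 e" using e by (intro interior_limit_point) auto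
    qed (use True z in auto)
  next
    case False thus ?thesis using g unfolding good_def by auto
  qed
  thus ?thesis by (simp add: fun_eq_iff)
qed

lemma qfactor_small:
  assumes q: "0 \<le> q" "q < 1" and small: "cmod z * mnorm A \<le> 1/2"
  shows "cmod (of_real (1 - q) * z * of_real q ^ j) * mnorm A \<le> 1/2"
proof -
  have "q ^ j \<le> 1" using q power_le_one[of q j] by simp
  hence "cmod z * q ^ j \<le> cmod z" by (simp add: mult_left_le)
  hence "cmod (of_real (1 - q) * z * of_real q ^ j) \<le> cmod z" using cmod_coef[OF q, of z j] by simp
  hence "cmod (of_real (1 - q) * z * of_real q ^ j) * mnorm A \<le> cmod z * mnorm A"
    using mnorm_ge0 by (intro mult_right_mono) auto
  thus ?thesis using small by simp
qed

lemma qfactor_props: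
  assumes A: "A \<in> carrier_mat N N" and q: "0 \<le> q" "q < 1" and small: "cmod z * mnorm A \<le> 1/2"
  shows "qfactor q N A z j * minv (qfactor q N A z j) = 1\<^sub>m N"
    "minv (qfactor q N A z j) * qfactor q N A z j = 1\<^sub>m N"
    "minv (qfactor q N A z j) \<in> carrier_mat N N"
    "qfactor q N A z j \<in> carrier_mat N N"
  using factor_props[OF A qfactor_small[OF q small] qfactor_eq] A
  by (auto simp: qfactor_def minus_carrier_mat)

lemma qprod_unique:
  assumes "qprod_converges_to q N A z P" "qprod_converges_to q N A z P'"
  shows "P = P'"
proof (rule eq_matI)
  fix i l assume "i < dim_row P'" "l < dim_col P'"
  hence "i < N" "l < N" using assms unfolding qprod_converges_to_def by auto
  hence "(\<lambda>k. qpartial q N A z k $$ (i, l)) \<longlonglongrightarrow> P $$ (i, l)"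
    "(\<lambda>k. qpartial q N A z k $$ (i, l)) \<longlonglongrightarrow> P' $$ (i, l)"
    using assms unfolding qprod_converges_to_def by auto
  thus "P $$ (i, l) = P' $$ (i, l)" by (rule LIMSEQ_unique)
qed (use assms in \<open>auto simp: qprod_converges_to_def\<close>)

lemma qprod_funeq:
  assumes A: "A \<in> carrier_mat N N" and q: "0 \<le> q" "q < 1" and small: "cmod z * mnorm A \<le> 1/2"
    and P: "qprod_converges_to q N A z P" and P': "qprod_converges_to q N A (of_real q * z) P'"
  shows "P' = qfactor q N A z 0 * P"
proof -
  have smallq: "cmod (of_real q * z) * mnorm A \<le> 1/2"
  proof -
    have "cmod (of_real q * z) \<le> cmod z" using q by (simp add: norm_mult mult_left_le_one_le)
    hence "cmod (of_real q * z) * mnorm A \<le> cmod z * mnorm A" using mnorm_ge0 by (intro mult_right_mono) auto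
    thus ?thesis using small by simp
  qed
  note fz = qfactor_props[OF A q small]
  have Qc: "qpartial q N A (of_real q * z) k \<in> carrier_mat N N" for k
    by (rule qpartial_carrier) (use qfactor_props(3)[OF A q smallq] in auto)
  have Pc: "P \<in> carrier_mat N N" "P' \<in> carrier_mat N N" using P P' by (auto simp: qprod_converges_to_def)
  have eq: "P = minv (qfactor q N A z 0) * P'"
  proof (rule eq_matI)
    fix i l assume "i < dim_row (minv (qfactor q N A z 0) * P')" "l < dim_col (minv (qfactor q N A z 0) * P')"
    hence il: "i < N" "l < N" using fz(3)[of 0] Pc by auto
    have "(\<lambda>k. qpartial q N A z (Suc k) $$ (i, l)) \<longlonglongrightarrow> P $$ (i, l)"
      using P il unfolding qprod_converges_to_def by (auto intro: LIMSEQ_Suc)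
    moreover have eqs: "(\<lambda>k. qpartial q N A z (Suc k) $$ (i, l)) =
        (\<lambda>k. \<Sum>a<N. minv (qfactor q N A z 0) $$ (i, a) * qpartial q N A (of_real q * z) k $$ (a, l))"
      by (rule ext, subst qpartial_Suc_left, rule mult_entry[OF fz(3) Qc il])
    moreover have "(\<lambda>k. \<Sum>a<N. minv (qfactor q N A z 0) $$ (i, a) * qpartial q N A (of_real q * z) k $$ (a, l))
        \<longlonglongrightarrow> (\<Sum>a<N. minv (qfactor q N A z 0) $$ (i, a) * P' $$ (a, l))"
      using P' il unfolding qprod_converges_to_def by (auto intro!: tendsto_sum tendsto_mult tendsto_const)
    ultimately have "P $$ (i, l) = (\<Sum>a<N. minv (qfactor q N A z 0) $$ (i, a) * P' $$ (a, l))"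
      by (simp only: LIMSEQ_unique)
    also have "\<dots> = (minv (qfactor q N A z 0) * P') $$ (i, l)"
      by (rule mult_entry[OF fz(3) Pc(2) il, symmetric])
    finally show "P $$ (i, l) = (minv (qfactor q N A z 0) * P') $$ (i, l)" .
  qed (use fz(3)[of 0] Pc in auto)
  have "qfactor q N A z 0 * P = (qfactor q N A z 0 * minv (qfactor q N A z 0)) * P'"
    unfolding eq by (rule assoc_mult_mat[OF fz(4) fz(3) Pc(2), symmetric])
  also have "\<dots> = P'" using fz(1) Pc by simp
  finally show ?thesis by simp
qed

definition restr :: "real \<Rightarrow> (complex \<Rightarrow> nat \<Rightarrow> complex) \<Rightarrow> (complex \<Rightarrow> nat \<Rightarrow> complex)" where
  "restr e g = (\<lambda>z i. if z \<in> ball 0 e then g z i else 0)"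

lemma restr_sum: "restr e (\<Sum>k\<in>K. fscale (c k) (f k)) = (\<Sum>k\<in>K. fscale (c k) (restr e (f k)))"
proof -
  have "restr e (\<Sum>k\<in>K. fscale (c k) (f k)) z i = (\<Sum>k\<in>K. fscale (c k) (restr e (f k))) z i" for z i
    by (cases "z \<in> ball 0 e") (auto simp: restr_def sum_fun_apply2)
  thus ?thesis by (simp add: fun_eq_iff)
qed

lemma restr_diff: "restr e (f - g) = restr e f - restr e g"
  by (auto simp: restr_def fun_eq_iff)

lemma finite_dim_from_restriction:
  assumes q: "0 \<le> q" "q < 1" and r: "r > 0"
    and analytic: "\<forall>i<n. \<forall>j<m. (\<lambda>z. T z $$ (i, j)) holomorphic_on ball 0 r"
    and e: "0 < e" "e \<le> r" and FS: "finite FS"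
    and hr: "\<And>c. c \<in> Cols q r n m T \<Longrightarrow> restr e c \<in> fs.span FS"
  shows "Rq_cyclic q r n m T"
proof -
  let ?C = "Cols q r n m T"
  have inj0: "g = 0" if "g \<in> fs.span ?C" "restr e g = 0" for g
  proof (rule good_zero[OF span_good[OF q r analytic that(1)] e])
    fix z :: complex and i :: nat assume "z \<in> ball 0 e" "i < n"
    thus "g z i = 0" using fun_cong[OF fun_cong[OF that(2)], of z i] by (simp add: restr_def)
  qed
  have bound: "card B' \<le> card FS" if B': "finite B'" "B' \<subseteq> ?C" "fs.independent B'" for B'
  proof -
    have inj: "inj_on (restr e) B'"
    proof (rule inj_onI)
      fix u v assume uv: "u \<in> B'" "v \<in> B'" "restr e u = restr e v"
      have "u - v \<in> fs.span ?C" using uv B' by (intro fs.span_diff fs.span_base) auto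
      moreover have "restr e (u - v) = 0" using uv(3) by (simp add: restr_diff)
      ultimately have "u - v = 0" by (rule inj0)
      thus "u = v" by simp
    qed
    have ind: "fs.independent (restr e ` B')"
    proof
      assume "fs.dependent (restr e ` B')"
      then obtain c where c: "\<exists>w\<in>restr e ` B'. c w \<noteq> 0" "(\<Sum>v\<in>restr e ` B'. fscale (c v) v) = 0"
        using fs.dependent_finite[of "restr e ` B'"] B' by auto
      have "restr e (\<Sum>u\<in>B'. fscale (c (restr e u)) u) = (\<Sum>u\<in>B'. fscale (c (restr e u)) (restr e u))"
        by (rule restr_sum)
      also have "\<dots> = (\<Sum>v\<in>restr e ` B'. fscale (c v) v)"
        by (rule sum.reindex[OF inj, symmetric, unfolded o_def])
      also have "\<dots> = 0" by (rule c(2))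
      finally have "(\<Sum>u\<in>B'. fscale (c (restr e u)) u) = 0"
        by (rule inj0[rotated]) (intro fs.span_sum fs.span_scale fs.span_base, use B' in auto)
      moreover obtain u where "u \<in> B'" "c (restr e u) \<noteq> 0" using c(1) by auto
      ultimately have "fs.dependent B'"
        using fs.dependent_finite[of B'] B' by auto
      thus False using B'(3) by simp
    qed
    have "restr e ` B' \<subseteq> fs.span FS" using hr B' by auto
    hence "card (restr e ` B') \<le> card FS" using fs.independent_span_bound[OF FS ind] by simp
    thus ?thesis using card_image[OF inj] by simp
  qed
  obtain Bs where Bs: "Bs \<subseteq> ?C" "fs.independent Bs" "?C \<subseteq> fs.span Bs"
    by (rule fs.maximal_independent_subset)
  have "finite Bs"
  proof (rule ccontr)
    assume "infinite Bs"
    then obtain B' where B': "finite B'" "card B' = Suc (card FS)" "B' \<subseteq> Bs"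
      using infinite_arbitrarily_large by blast
    have "card B' \<le> card FS"
      using B' Bs fs.independent_mono[OF Bs(2) B'(3)] by (intro bound) auto
    thus False using B'(2) by simp
  qed
  thus ?thesis unfolding Rq_cyclic_Cols using Bs(3) by blast
qed

lemma mnorm_entry_bound:
  assumes "X \<in> carrier_mat N N" "\<And>i l. i < N \<Longrightarrow> l < N \<Longrightarrow> cmod (X $$ (i, l)) \<le> b"
  shows "mnorm X \<le> real N * real N * b"
proof -
  have "mnorm X = (\<Sum>i<N. \<Sum>l<N. cmod (X $$ (i, l)))" using assms by (simp add: mnorm_def)
  also have "\<dots> \<le> (\<Sum>i<N. \<Sum>l<N. b)" by (intro sum_mono assms) auto
  finally show ?thesis by simp
qed

lemma backward:
  assumes q: "0 \<le> q" "q < 1" and r: "r > 0"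
    and analytic: "\<forall>i<n. \<forall>j<m. (\<lambda>z. T z $$ (i, j)) holomorphic_on ball 0 r"
    and C: "C \<in> carrier_mat n N" and A: "A \<in> carrier_mat N N" and B: "B \<in> carrier_mat N m"
    and eps: "\<epsilon> > 0" "\<epsilon> \<le> r"
    and rep: "\<forall>z\<in>ball 0 \<epsilon>. \<exists>P. qprod_converges_to q N A z P \<and> T z = C * P * B"
  shows "Rq_cyclic q r n m T"
proof -
  define e where "e = min \<epsilon> (1 / (2 * (mnorm A + 1)))"
  have a0: "mnorm A \<ge> 0" by (rule mnorm_ge0)
  have e0: "e > 0" "e \<le> r" using eps a0 by (auto simp: e_def)
  have be: "z \<in> ball (0::complex) \<epsilon>" if "z \<in> ball (0::complex) e" for z using that by (auto simp: e_def)
  have small: "cmod z * mnorm A \<le> 1/2" if "z \<in> ball (0::complex) e" for z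
  proof -
    have "cmod z \<le> 1 / (2 * (mnorm A + 1))" using that by (auto simp: e_def)
    hence "cmod z * mnorm A \<le> 1 / (2 * (mnorm A + 1)) * mnorm A" using a0 by (intro mult_right_mono) auto
    also have "\<dots> \<le> 1/2" using a0 by (simp add: field_simps)
    finally show ?thesis .
  qed
  have qz: "of_real q * z \<in> ball 0 e" if "z \<in> ball (0::complex) e" for z using qball[OF that q] .
  define L where "L z = real N * exp (2 * real N * cmod z * mnorm A / (1 - q)) * (2 * real N * cmod z * mnorm A / (1 - q))" for z
  define PP where "PP z = (SOME P. qprod_converges_to q N A z P)" for z
  have PP: "qprod_converges_to q N A z (PP z)" "\<forall>i<N. \<forall>l<N. cmod (PP z $$ (i, l) - 1\<^sub>m N $$ (i, l)) \<le> L z"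
    if zin: "z \<in> ball (0::complex) e" for z
  proof -
    obtain P where P: "qprod_converges_to q N A z P" "\<forall>i<N. \<forall>l<N. cmod (P $$ (i, l) - 1\<^sub>m N $$ (i, l)) \<le> L z"
      using qprod_conv[OF A q small[OF zin]] unfolding L_def by blast
    have c1: "qprod_converges_to q N A z (PP z)" unfolding PP_def using P(1) by (rule someI)
    moreover have "PP z = P" using qprod_unique[OF c1 P(1)] .
    ultimately show "qprod_converges_to q N A z (PP z)" "\<forall>i<N. \<forall>l<N. cmod (PP z $$ (i, l) - 1\<^sub>m N $$ (i, l)) \<le> L z"
      using P by auto
  qed
  have PPc: "PP z \<in> carrier_mat N N" if "z \<in> ball (0::complex) e" for z
    using PP(1)[OF that] by (simp add: qprod_converges_to_def)
  have Teq: "T z = C * PP z * B" if zin: "z \<in> ball (0::complex) e" for z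
  proof -
    obtain P where P: "qprod_converges_to q N A z P" "T z = C * P * B" using rep be[OF zin] by blast
    thus ?thesis using qprod_unique[OF P(1) PP(1)[OF zin]] by simp
  qed
  have PPq: "PP (of_real q * z) = qfactor q N A z 0 * PP z" if "z \<in> ball (0::complex) e" for z
    by (rule qprod_funeq[OF A q small[OF that] PP(1)[OF that] PP(1)[OF qz[OF that]]])
  define X where "X z = PP z * B" for z
  have Xc: "X z \<in> carrier_mat N m" if "z \<in> ball (0::complex) e" for z using PPc[OF that] B by (simp add: X_def)
  define cc where "cc z = of_real (1 - q) * z" for z :: complex
  have Xq: "X (of_real q * z) = X z - cc z \<cdot>\<^sub>m (A * X z)" if zin: "z \<in> ball (0::complex) e" for z
  proof -
    note P = PPc[OF zin]
    have f0: "qfactor q N A z 0 = 1\<^sub>m N - cc z \<cdot>\<^sub>m A" by (simp add: qfactor_def cc_def)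
    have 1: "(1\<^sub>m N - cc z \<cdot>\<^sub>m A) * PP z = PP z - cc z \<cdot>\<^sub>m (A * PP z)"
      using A P by (simp add: minus_mult_distrib_mat[of "1\<^sub>m N" N N "cc z \<cdot>\<^sub>m A" "PP z" N] mult_smult_assoc_mat)
    have 2: "(PP z - cc z \<cdot>\<^sub>m (A * PP z)) * B = PP z * B - (cc z \<cdot>\<^sub>m (A * PP z)) * B"
      by (rule minus_mult_distrib_mat[of _ N N _ B m]) (use A P B in auto)
    have 3: "(cc z \<cdot>\<^sub>m (A * PP z)) * B = cc z \<cdot>\<^sub>m (A * (PP z * B))"
      using A P B by (simp add: mult_smult_assoc_mat[of "A * PP z" N N B m])
    show ?thesis unfolding X_def PPq[OF zin] f0 1 2 3 ..
  qed
  define Y where "Y l z = C * (A ^\<^sub>m l * X z)" for l z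
  have Yc: "Y l z \<in> carrier_mat n m" if "z \<in> ball (0::complex) e" for l z
    unfolding Y_def by (rule mult_carrier_mat[OF C mult_carrier_mat[OF pow_carrier_mat[OF A] Xc[OF that]]])
  have Yq: "Y l (of_real q * z) $$ (i, j) = Y l z $$ (i, j) - cc z * Y (Suc l) z $$ (i, j)"
    if zin: "z \<in> ball (0::complex) e" and ij: "i < n" "j < m" for l z i j
  proof -
    note Xz = Xc[OF zin]
    have Al: "A ^\<^sub>m l \<in> carrier_mat N N" using A by simp
    have AX: "A * X z \<in> carrier_mat N m" using A Xz by simp
    have "A ^\<^sub>m l * (X z - cc z \<cdot>\<^sub>m (A * X z)) = A ^\<^sub>m l * X z - A ^\<^sub>m l * (cc z \<cdot>\<^sub>m (A * X z))"
      by (rule mult_minus_distrib_mat[OF Al Xz]) (use AX in simp)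
    also have "A ^\<^sub>m l * (cc z \<cdot>\<^sub>m (A * X z)) = cc z \<cdot>\<^sub>m (A ^\<^sub>m Suc l * X z)"
      using Al A Xz by (simp add: mult_smult_distrib[OF Al AX] assoc_mult_mat[OF Al A Xz])
    finally have e1: "A ^\<^sub>m l * X (of_real q * z) = A ^\<^sub>m l * X z - cc z \<cdot>\<^sub>m (A ^\<^sub>m Suc l * X z)"
      unfolding Xq[OF zin] .
    have U: "A ^\<^sub>m l * X z \<in> carrier_mat N m" "A ^\<^sub>m Suc l * X z \<in> carrier_mat N m"
      using Al A Xz by auto
    have "Y l (of_real q * z) = C * (A ^\<^sub>m l * X z) - C * (cc z \<cdot>\<^sub>m (A ^\<^sub>m Suc l * X z))"
      unfolding Y_def e1 by (rule mult_minus_distrib_mat[OF C U(1)]) (use U in simp)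
    also have "C * (cc z \<cdot>\<^sub>m (A ^\<^sub>m Suc l * X z)) = cc z \<cdot>\<^sub>m Y (Suc l) z"
      unfolding Y_def by (rule mult_smult_distrib[OF C U(2)])
    finally have "Y l (of_real q * z) = Y l z - cc z \<cdot>\<^sub>m Y (Suc l) z" by (simp add: Y_def)
    thus ?thesis using Yc[OF zin, of l] Yc[OF zin, of "Suc l"] ij by simp
  qed
  have z0: "(0::complex) \<in> ball 0 e" using e0 by simp
  have L0: "L 0 = 0" by (simp add: L_def)
  have Lt: "(L \<longlongrightarrow> 0) (at 0)"
  proof -
    have "isCont L 0" unfolding L_def using q by (intro continuous_intros) auto
    thus ?thesis using L0 by (simp add: isCont_def)
  qed
  have PP0: "PP 0 = 1\<^sub>m N"
  proof (rule eq_matI)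
    fix i l assume "i < dim_row (1\<^sub>m N :: complex mat)" "l < dim_col (1\<^sub>m N :: complex mat)"
    hence "cmod (PP 0 $$ (i, l) - 1\<^sub>m N $$ (i, l)) \<le> 0" using PP(2)[OF z0] L0 by auto
    thus "PP 0 $$ (i, l) = 1\<^sub>m N $$ (i, l)" by simp
  qed (use PPc[OF z0] in auto)
  have X0: "X 0 = B" unfolding X_def PP0 using B by simp
  have Ycont: "((\<lambda>w. Y l w $$ (i, j)) \<longlongrightarrow> Y l 0 $$ (i, j)) (at 0)" if ij: "i < n" "j < m" for l i j
  proof -
    define K where "K = mnorm C * mnorm (A ^\<^sub>m l) * (real N * real N) * mnorm B"
    have Al: "A ^\<^sub>m l \<in> carrier_mat N N" using A by simp
    have bnd: "cmod (Y l w $$ (i, j) - Y l 0 $$ (i, j)) \<le> K * L w" if win: "w \<in> ball 0 e" for w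
    proof -
      note Pw = PPc[OF win]
      have D: "PP w - 1\<^sub>m N \<in> carrier_mat N N" using Pw by (simp add: minus_carrier_mat)
      have DB: "(PP w - 1\<^sub>m N) * B \<in> carrier_mat N m" using D B by simp
      have ADB: "A ^\<^sub>m l * ((PP w - 1\<^sub>m N) * B) \<in> carrier_mat N m" using Al DB by simp
      have xd: "X w - X 0 = (PP w - 1\<^sub>m N) * B" unfolding X_def PP0
        by (rule minus_mult_distrib_mat[symmetric]) (use Pw B in auto)
      have "A ^\<^sub>m l * (X w - X 0) = A ^\<^sub>m l * X w - A ^\<^sub>m l * X 0"
        by (rule mult_minus_distrib_mat[OF Al Xc[OF win] Xc[OF z0]])
      hence "C * (A ^\<^sub>m l * (X w - X 0)) = C * (A ^\<^sub>m l * X w) - C * (A ^\<^sub>m l * X 0)"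
        using mult_minus_distrib_mat[OF C, of "A ^\<^sub>m l * X w" m "A ^\<^sub>m l * X 0"] Al Xc[OF win] Xc[OF z0] by simp
      hence eqd: "Y l w - Y l 0 = C * (A ^\<^sub>m l * ((PP w - 1\<^sub>m N) * B))" unfolding Y_def xd by simp
      have "Y l w $$ (i, j) - Y l 0 $$ (i, j) = (Y l w - Y l 0) $$ (i, j)"
        using Yc[OF win, of l] Yc[OF z0, of l] ij by simp
      hence ed: "Y l w $$ (i, j) - Y l 0 $$ (i, j) = (C * (A ^\<^sub>m l * ((PP w - 1\<^sub>m N) * B))) $$ (i, j)"
        unfolding eqd .
      have "cmod (Y l w $$ (i, j) - Y l 0 $$ (i, j)) \<le> mnorm (C * (A ^\<^sub>m l * ((PP w - 1\<^sub>m N) * B)))"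
        unfolding ed by (rule entry_le_mnorm) (use C ADB ij in auto)
      also have "\<dots> \<le> mnorm C * (mnorm (A ^\<^sub>m l) * (mnorm (PP w - 1\<^sub>m N) * mnorm B))"
      proof -
        have "mnorm (C * (A ^\<^sub>m l * ((PP w - 1\<^sub>m N) * B))) \<le> mnorm C * mnorm (A ^\<^sub>m l * ((PP w - 1\<^sub>m N) * B))"
          by (rule mnorm_mult[OF C ADB])
        also have "\<dots> \<le> mnorm C * (mnorm (A ^\<^sub>m l) * mnorm ((PP w - 1\<^sub>m N) * B))"
          by (intro mult_left_mono mnorm_mult[OF Al DB] mnorm_ge0)
        also have "\<dots> \<le> mnorm C * (mnorm (A ^\<^sub>m l) * (mnorm (PP w - 1\<^sub>m N) * mnorm B))"
          by (intro mult_left_mono mnorm_mult[OF D B] mnorm_ge0)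
        finally show ?thesis .
      qed
      also have "\<dots> \<le> mnorm C * (mnorm (A ^\<^sub>m l) * ((real N * real N * L w) * mnorm B))"
      proof -
        have "mnorm (PP w - 1\<^sub>m N) \<le> real N * real N * L w"
          by (rule mnorm_entry_bound[OF D]) (use PP(2)[OF win] Pw in auto)
        thus ?thesis by (intro mult_left_mono mult_right_mono mnorm_ge0) auto
      qed
      also have "\<dots> = K * L w" by (simp add: K_def ac_simps)
      finally show ?thesis .
    qed
    have "((\<lambda>w. Y l w $$ (i, j) - Y l 0 $$ (i, j)) \<longlongrightarrow> 0) (at 0)"
    proof (rule Lim_null_comparison)
      show "\<forall>\<^sub>F w in at 0. cmod (Y l w $$ (i, j) - Y l 0 $$ (i, j)) \<le> K * L w"
        using eventually_at_ball[OF e0(1), of "0::complex" UNIV] by eventually_elim (use bnd in auto)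
      show "((\<lambda>w. K * L w) \<longlongrightarrow> 0) (at 0)" using tendsto_mult_right_zero[OF Lt, of K] by simp
    qed
    thus ?thesis by (rule LIM_zero_cancel)
  qed
  have main: "\<forall>z\<in>ball 0 e. \<forall>i<n. \<forall>j<m. Sit q n m T l z $$ (i, j) = Y l z $$ (i, j)" for l
  proof (induction l)
    case 0
    show ?case
    proof (intro ballI allI impI)
      fix z :: complex and i j assume zin: "z \<in> ball 0 e" and ij: "i < n" "j < m"
      have "Y 0 z = C * (PP z * B)" unfolding Y_def X_def using A PPc[OF zin] B by simp
      also have "\<dots> = T z" using Teq[OF zin] C PPc[OF zin] B by simp
      finally show "Sit q n m T 0 z $$ (i, j) = Y 0 z $$ (i, j)" by simp
    qed
  next
    case (Suc l)
    have nz: "Sit q n m T (Suc l) z $$ (i, j) = Y (Suc l) z $$ (i, j)"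
      if zin: "z \<in> ball 0 e" and z0: "z \<noteq> 0" and ij: "i < n" "j < m" for z i j
    proof -
      have ccnz: "cc z \<noteq> 0"
      proof -
        have "complex_of_real (1 - q) \<noteq> 0" using q by simp
        thus ?thesis using z0 by (simp add: cc_def)
      qed
      have "Sit q n m T (Suc l) z $$ (i, j) = Rq q (\<lambda>w. Sit q n m T l w $$ (i, j)) z"
        by (rule Sit_Suc_entry[OF ij])
      also have "\<dots> = (Sit q n m T l z $$ (i, j) - Sit q n m T l (of_real q * z) $$ (i, j)) / cc z"
        using z0 by (simp add: Rq_def cc_def)
      also have "\<dots> = (Y l z $$ (i, j) - Y l (of_real q * z) $$ (i, j)) / cc z"
        using Suc zin qz[OF zin] ij by simp
      also have "\<dots> = Y (Suc l) z $$ (i, j)"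
        using Yq[OF zin ij, of l] ccnz by simp
      finally show ?thesis .
    qed
    show ?case
    proof (intro ballI allI impI)
      fix z :: complex and i j assume zin: "z \<in> ball 0 e" and ij: "i < n" "j < m"
      show "Sit q n m T (Suc l) z $$ (i, j) = Y (Suc l) z $$ (i, j)"
      proof (cases "z = 0")
        case False thus ?thesis using nz zin ij by simp
      next
        case True
        have hol: "(\<lambda>w. Sit q n m T (Suc l) w $$ (i, j)) holomorphic_on ball 0 r"
          using Sit_holo[OF q r analytic, of "Suc l"] ij by blast
        have "isCont (\<lambda>w. Sit q n m T (Suc l) w $$ (i, j)) 0"
          using holomorphic_on_imp_continuous_on[OF hol] e0
          by (simp add: continuous_on_eq_continuous_at[OF open_ball])
        hence t1: "((\<lambda>w. Sit q n m T (Suc l) w $$ (i, j)) \<longlongrightarrow> Sit q n m T (Suc l) 0 $$ (i, j)) (at 0)"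
          by (simp add: isCont_def)
        have ev: "\<forall>\<^sub>F w in at 0. Y (Suc l) w $$ (i, j) = Sit q n m T (Suc l) w $$ (i, j)"
          using eventually_at_ball'[OF e0(1), of "0::complex" UNIV] by eventually_elim (use nz ij in auto)
        have t2: "((\<lambda>w. Sit q n m T (Suc l) w $$ (i, j)) \<longlongrightarrow> Y (Suc l) 0 $$ (i, j)) (at 0)"
          using tendsto_cong[OF ev] Ycont[OF ij, of "Suc l"] by simp
        have "Sit q n m T (Suc l) 0 $$ (i, j) = Y (Suc l) 0 $$ (i, j)"
          by (rule tendsto_unique[OF _ t1 t2]) simp
        thus ?thesis using True by simp
      qed
    qed
  qed
  define Fe where "Fe = (\<lambda>(a, b, j). (\<lambda>z i. if z \<in> ball 0 e \<and> i < n then C $$ (i, a) * X z $$ (b, j) else 0))"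
  define FS where "FS = Fe ` ({..<N} \<times> {..<N} \<times> {..<m})"
  have FS: "finite FS" unfolding FS_def by simp
  show ?thesis
  proof (rule finite_dim_from_restriction[OF q r analytic e0 FS])
    fix c assume "c \<in> Cols q r n m T"
    then obtain l j where c: "c = col_fun r n (Sit q n m T l) j" "j < m" unfolding Cols_def by auto
    have "restr e c z i = (\<Sum>(a, b)\<in>{..<N} \<times> {..<N}. fscale ((A ^\<^sub>m l) $$ (a, b)) (Fe (a, b, j))) z i"
      for z i
    proof -
      have rhs: "(\<Sum>(a, b)\<in>{..<N} \<times> {..<N}. fscale ((A ^\<^sub>m l) $$ (a, b)) (Fe (a, b, j))) z i =
          (\<Sum>(a, b)\<in>{..<N} \<times> {..<N}. (A ^\<^sub>m l) $$ (a, b) *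
             (if z \<in> ball 0 e \<and> i < n then C $$ (i, a) * X z $$ (b, j) else 0))"
        unfolding sum_fun_apply2 by (intro sum.cong refl) (auto simp: Fe_def)
      show ?thesis
      proof (cases "z \<in> ball 0 e \<and> i < n")
        case True
        hence zin: "z \<in> ball 0 e" and i: "i < n" by auto
        have zr: "z \<in> ball 0 r" using zin e0 by auto
        have Al: "A ^\<^sub>m l \<in> carrier_mat N N" using A by simp
        have AX: "A ^\<^sub>m l * X z \<in> carrier_mat N m" using Al Xc[OF zin] by simp
        have "restr e c z i = Sit q n m T l z $$ (i, j)"
          using zin zr i by (simp add: restr_def c col_fun_def)
        also have "\<dots> = Y l z $$ (i, j)" using main[of l] zin i c(2) by simp
        also have "\<dots> = (\<Sum>a<N. C $$ (i, a) * (A ^\<^sub>m l * X z) $$ (a, j))"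
          unfolding Y_def by (rule mult_entry[OF C AX i c(2)])
        also have "\<dots> = (\<Sum>a<N. C $$ (i, a) * (\<Sum>b<N. (A ^\<^sub>m l) $$ (a, b) * X z $$ (b, j)))"
          by (intro sum.cong refl, subst mult_entry[OF Al Xc[OF zin] _ c(2)]) auto
        also have "\<dots> = (\<Sum>a<N. \<Sum>b<N. (A ^\<^sub>m l) $$ (a, b) * (C $$ (i, a) * X z $$ (b, j)))"
          by (simp add: sum_distrib_left ac_simps)
        also have "\<dots> = (\<Sum>(a, b)\<in>{..<N} \<times> {..<N}. (A ^\<^sub>m l) $$ (a, b) * (C $$ (i, a) * X z $$ (b, j)))"
          by (rule sum.cartesian_product)
        also have "\<dots> = (\<Sum>(a, b)\<in>{..<N} \<times> {..<N}. fscale ((A ^\<^sub>m l) $$ (a, b)) (Fe (a, b, j))) z i"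
          unfolding rhs using True by simp
        finally show ?thesis .
      next
        case False
        have "restr e c z i = 0" using False e0 by (auto simp: restr_def c col_fun_def)
        moreover have "(\<Sum>(a, b)\<in>{..<N} \<times> {..<N}. (A ^\<^sub>m l) $$ (a, b) *
             (if z \<in> ball 0 e \<and> i < n then C $$ (i, a) * X z $$ (b, j) else 0)) = 0"
          using False by (intro sum.neutral) auto
        ultimately show ?thesis unfolding rhs by simp
      qed
    qed
    hence "restr e c = (\<Sum>(a, b)\<in>{..<N} \<times> {..<N}. fscale ((A ^\<^sub>m l) $$ (a, b)) (Fe (a, b, j)))"
      by (simp add: fun_eq_iff)
    also have "\<dots> \<in> fs.span FS"
    proof (intro fs.span_sum)
      fix x assume "x \<in> {..<N} \<times> {..<N}"
      then obtain a b where ab: "x = (a, b)" "a < N" "b < N" by auto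
      hence "Fe (a, b, j) \<in> FS" using c(2) by (auto simp: FS_def)
      hence "fscale ((A ^\<^sub>m l) $$ (a, b)) (Fe (a, b, j)) \<in> fs.span FS" by (intro fs.span_scale fs.span_base)
      thus "(case x of (a, b) \<Rightarrow> fscale ((A ^\<^sub>m l) $$ (a, b)) (Fe (a, b, j))) \<in> fs.span FS" using ab by simp
    qed
    finally show "restr e c \<in> fs.span FS" .
  qed
qed

lemma comm_minv:
  assumes F: "F \<in> carrier_mat N N" and Fi: "minv F \<in> carrier_mat N N"
    and inv1: "F * minv F = 1\<^sub>m N" and inv2: "minv F * F = 1\<^sub>m N"
    and X: "X \<in> carrier_mat N N" and c: "X * F = F * X"
  shows "X * minv F = minv F * X"
proof -
  have XF: "X * F \<in> carrier_mat N N" "minv F * X \<in> carrier_mat N N" using X F Fi by auto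
  have "X * minv F = (minv F * F) * X * minv F" using inv2 X Fi by simp
  also have "\<dots> = minv F * (F * X) * minv F" using assoc_mult_mat[OF Fi F X] by simp
  also have "\<dots> = minv F * (X * F) * minv F" by (simp add: c)
  also have "\<dots> = (minv F * X) * F * minv F" using assoc_mult_mat[OF Fi X F] by simp
  also have "\<dots> = minv F * X * (F * minv F)" using assoc_mult_mat[OF XF(2) F Fi] by simp
  also have "\<dots> = minv F * X" using inv1 right_mult_one_mat[OF XF(2)] by simp
  finally show ?thesis .
qed

lemma comm_qfactor:
  assumes A: "A \<in> carrier_mat N N" and X: "X \<in> carrier_mat N N" and c: "X * A = A * X"
  shows "X * qfactor q N A z j = qfactor q N A z j * X"
proof -
  define d where "d = of_real (1 - q) * z * of_real q ^ j"
  have f: "qfactor q N A z j = 1\<^sub>m N - d \<cdot>\<^sub>m A" by (simp add: qfactor_def d_def)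
  have "X * (1\<^sub>m N - d \<cdot>\<^sub>m A) = X * 1\<^sub>m N - X * (d \<cdot>\<^sub>m A)"
    by (rule mult_minus_distrib_mat[OF X]) (use A in auto)
  also have "\<dots> = X - d \<cdot>\<^sub>m (X * A)" using X A by (simp add: mult_smult_distrib)
  also have "\<dots> = X - d \<cdot>\<^sub>m (A * X)" by (simp add: c)
  also have "\<dots> = 1\<^sub>m N * X - (d \<cdot>\<^sub>m A) * X" using X A by (simp add: mult_smult_assoc_mat)
  also have "\<dots> = (1\<^sub>m N - d \<cdot>\<^sub>m A) * X"
    by (rule minus_mult_distrib_mat[symmetric]) (use A X in auto)
  finally show ?thesis unfolding f .
qed

lemma qpartial_comm:
  assumes A: "A \<in> carrier_mat N N" and q: "0 \<le> q" "q < 1" and small: "cmod z * mnorm A \<le> 1/2"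
  shows "qpartial q N A z k * A = A * qpartial q N A z k"
  using small
proof (induction k arbitrary: z)
  case 0 thus ?case using A by (simp add: qpartial_def)
next
  case (Suc k)
  have smallq: "cmod (of_real q * z) * mnorm A \<le> 1/2"
  proof -
    have "cmod (of_real q * z) \<le> cmod z" using q by (simp add: norm_mult mult_left_le_one_le)
    hence "cmod (of_real q * z) * mnorm A \<le> cmod z * mnorm A" using mnorm_ge0 by (intro mult_right_mono) auto
    thus ?thesis using Suc.prems by simp
  qed
  note fz = qfactor_props[OF A q Suc.prems]
  have Qc: "qpartial q N A (of_real q * z) k \<in> carrier_mat N N"
    by (rule qpartial_carrier) (use qfactor_props(3)[OF A q smallq] in auto)
  have IH: "qpartial q N A (of_real q * z) k * A = A * qpartial q N A (of_real q * z) k"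
    by (rule Suc.IH[OF smallq])
  have AF: "A * qfactor q N A z 0 = qfactor q N A z 0 * A" by (rule comm_qfactor[OF A A refl])
  have MA: "A * minv (qfactor q N A z 0) = minv (qfactor q N A z 0) * A"
    by (rule comm_minv[OF fz(4) fz(3) fz(1) fz(2) A AF])
  note M = fz(3)[of 0]
  have "minv (qfactor q N A z 0) * qpartial q N A (of_real q * z) k * A
        = minv (qfactor q N A z 0) * (qpartial q N A (of_real q * z) k * A)"
    by (rule assoc_mult_mat[OF M Qc A])
  also have "\<dots> = (minv (qfactor q N A z 0) * A) * qpartial q N A (of_real q * z) k"
    unfolding IH by (rule assoc_mult_mat[OF M A Qc, symmetric])
  also have "\<dots> = A * (minv (qfactor q N A z 0) * qpartial q N A (of_real q * z) k)"
    unfolding MA[symmetric] by (rule assoc_mult_mat[OF A M Qc])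
  finally show ?case unfolding qpartial_Suc_left .
qed

lemma forward:
  assumes q: "0 \<le> q" "q < 1" and r: "r > 0"
    and dims: "\<forall>z\<in>ball 0 r. T z \<in> carrier_mat n m"
    and analytic: "\<forall>i<n. \<forall>j<m. (\<lambda>z. T z $$ (i, j)) holomorphic_on ball 0 r"
    and cyc: "Rq_cyclic q r n m T"
  shows "\<exists>N::nat. \<exists>C A B. C \<in> carrier_mat n N \<and> A \<in> carrier_mat N N \<and> B \<in> carrier_mat N m \<and>
      (\<exists>\<epsilon>>0. \<epsilon> \<le> r \<and> (\<forall>z\<in>ball 0 \<epsilon>. \<exists>P. qprod_converges_to q N A z P \<and> T z = C * P * B))"
proof -
  let ?C = "Cols q r n m T"
  obtain F where F: "finite F" "?C \<subseteq> fs.span F" using cyc unfolding Rq_cyclic_Cols by blast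
  obtain Bs where Bs: "Bs \<subseteq> ?C" "fs.independent Bs" "?C \<subseteq> fs.span Bs"
    by (rule fs.maximal_independent_subset)
  have finB: "finite Bs" using fs.independent_span_bound[OF F(1) Bs(2)] Bs(1) F(2) by auto
  define N where "N = card Bs"
  obtain gg where gg: "bij_betw gg {..<N} Bs"
    using ex_bij_betw_nat_finite[OF finB] unfolding N_def atLeast0LessThan by blast
  have ggC: "gg a \<in> ?C" if "a < N" for a using gg Bs(1) that by (auto simp: bij_betw_def)
  have good: "good r n (gg a)" if "a < N" for a
    by (rule span_good[OF q r analytic fs.span_base[OF ggC[OF that]]])
  have hol: "(\<lambda>z. gg a z i) holomorphic_on ball 0 r" if "a < N" "i < n" for a i
    using good[OF that(1)] that(2) unfolding good_def by auto
  have reindex: "(\<Sum>v\<in>Bs. fscale (u v) v) = (\<Sum>b<N. fscale (u (gg b)) (gg b))" for u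
    using sum.reindex_bij_betw[OF gg, of "\<lambda>v. fscale (u v) v"] by simp
  have repr: "\<exists>u. g = (\<Sum>b<N. fscale (u (gg b)) (gg b))" if "g \<in> ?C" for g
  proof -
    have "g \<in> fs.span Bs" using that Bs(3) by auto
    then obtain u where "g = (\<Sum>v\<in>Bs. fscale (u v) v)" unfolding fs.span_finite[OF finB] by auto
    thus ?thesis unfolding reindex by blast
  qed
  define Rv where "Rv g = (\<lambda>z i. if z \<in> ball 0 r \<and> i < n then Rq q (\<lambda>w. g w i) z else 0)" for g :: "complex \<Rightarrow> nat \<Rightarrow> complex"
  have RvC: "Rv g \<in> ?C" if "g \<in> ?C" for g
  proof -
    obtain l j where g: "g = col_fun r n (Sit q n m T l) j" "j < m" using \<open>g \<in> ?C\<close> unfolding Cols_def by auto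
    have "Rv g z i = col_fun r n (Sit q n m T (Suc l)) j z i" for z i
    proof (cases "z \<in> ball 0 r \<and> i < n")
      case True
      have "Rq q (\<lambda>w. g w i) z = Rq q (\<lambda>w. Sit q n m T l w $$ (i, j)) z"
        by (rule Rq_local[OF _ _ q]) (use True in \<open>auto simp: g col_fun_def\<close>)
      also have "\<dots> = Sit q n m T (Suc l) z $$ (i, j)" by (rule Sit_Suc_entry[symmetric]) (use True g in auto)
      finally show ?thesis using True by (simp add: Rv_def col_fun_def)
    next
      case False thus ?thesis by (auto simp: Rv_def col_fun_def)
    qed
    hence "Rv g = col_fun r n (Sit q n m T (Suc l)) j" by (simp add: fun_eq_iff)
    thus ?thesis unfolding Cols_def using g(2) by blast
  qed
  obtain U where U: "\<forall>a<N. Rv (gg a) = (\<Sum>b<N. fscale (U a (gg b)) (gg b))"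
  proof -
    have "\<forall>a<N. \<exists>u. Rv (gg a) = (\<Sum>b<N. fscale (u (gg b)) (gg b))"
      using repr RvC ggC by blast
    thus ?thesis using that by metis
  qed
  have TC: "col_fun r n T j \<in> ?C" if "j < m" for j
  proof -
    have "col_fun r n (Sit q n m T 0) j \<in> ?C" unfolding Cols_def using that by blast
    thus ?thesis by simp
  qed
  obtain \<beta> where \<beta>: "\<forall>j<m. col_fun r n T j = (\<Sum>b<N. fscale (\<beta> j (gg b)) (gg b))"
  proof -
    have "\<forall>j<m. \<exists>u. col_fun r n T j = (\<Sum>b<N. fscale (u (gg b)) (gg b))"
      using repr TC by blast
    thus ?thesis using that by metis
  qed
  define Am where "Am = mat N N (\<lambda>(b, a). U a (gg b))"
  define Bm where "Bm = mat N m (\<lambda>(b, j). \<beta> j (gg b))"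
  define Cm where "Cm = mat n N (\<lambda>(i, a). gg a 0 i)"
  define G where "G z = mat n N (\<lambda>(i, a). gg a z i)" for z
  have Am: "Am \<in> carrier_mat N N" and Bm: "Bm \<in> carrier_mat N m" and Cm: "Cm \<in> carrier_mat n N"
    and Gc: "\<And>z. G z \<in> carrier_mat n N" by (auto simp: Am_def Bm_def Cm_def G_def)
  have TG: "T z = G z * Bm" if zin: "z \<in> ball 0 r" for z
  proof (rule eq_matI)
    fix i j assume "i < dim_row (G z * Bm)" "j < dim_col (G z * Bm)"
    hence ij: "i < n" "j < m" using Gc[of z] Bm by auto
    have "T z $$ (i, j) = col_fun r n T j z i" using zin ij by (simp add: col_fun_def)
    also have "\<dots> = (\<Sum>b<N. \<beta> j (gg b) * gg b z i)" using \<beta> ij by (simp add: sum_fun_apply2)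
    also have "\<dots> = (\<Sum>b<N. G z $$ (i, b) * Bm $$ (b, j))"
      using ij by (intro sum.cong refl) (auto simp: G_def Bm_def)
    also have "\<dots> = (G z * Bm) $$ (i, j)" by (rule mult_entry[OF Gc Bm ij, symmetric])
    finally show "T z $$ (i, j) = (G z * Bm) $$ (i, j)" .
  qed (use dims zin Gc[of z] Bm in auto)
  have Gq: "G (of_real q * z) = G z * qfactor q N Am z 0" if zin: "z \<in> ball 0 r" for z
  proof (rule eq_matI)
    define c where "c = complex_of_real (1 - q) * z"
    have f0: "qfactor q N Am z 0 = 1\<^sub>m N - c \<cdot>\<^sub>m Am" by (simp add: qfactor_def c_def)
    have fc: "qfactor q N Am z 0 \<in> carrier_mat N N" unfolding f0 using Am by (simp add: minus_carrier_mat)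
    fix i a assume "i < dim_row (G z * qfactor q N Am z 0)" "a < dim_col (G z * qfactor q N Am z 0)"
    hence ia: "i < n" "a < N" using Gc[of z] fc by auto
    have Ssum: "Rq q (\<lambda>w. gg a w i) z = (\<Sum>b<N. U a (gg b) * gg b z i)"
    proof -
      have "Rv (gg a) z i = (\<Sum>b<N. U a (gg b) * gg b z i)" using U ia by (simp add: sum_fun_apply2)
      thus ?thesis using zin ia by (simp add: Rv_def)
    qed
    have key: "gg a (of_real q * z) i = gg a z i - c * (\<Sum>b<N. U a (gg b) * gg b z i)"
    proof (cases "z = 0")
      case True thus ?thesis by (simp add: c_def)
    next
      case False
      have cnz: "c \<noteq> 0" using False q by (simp add: c_def)
      have "(gg a z i - gg a (of_real q * z) i) / c = (\<Sum>b<N. U a (gg b) * gg b z i)"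
        using Ssum False by (simp add: Rq_def c_def)
      hence "gg a z i - gg a (of_real q * z) i = c * (\<Sum>b<N. U a (gg b) * gg b z i)"
        using cnz by (simp add: field_simps)
      thus ?thesis by (simp add: algebra_simps)
    qed
    have "(G z * qfactor q N Am z 0) $$ (i, a) = (\<Sum>b<N. G z $$ (i, b) * qfactor q N Am z 0 $$ (b, a))"
      by (rule mult_entry[OF Gc fc ia])
    also have "\<dots> = (\<Sum>b<N. gg b z i * (if b = a then 1 else 0) - c * (U a (gg b) * gg b z i))"
    proof (intro sum.cong refl)
      fix b assume "b \<in> {..<N}"
      hence b: "b < N" by simp
      have qe: "qfactor q N Am z 0 $$ (b, a) = (if b = a then 1 else 0) - c * U a (gg b)"
        unfolding f0 using Am b ia by (simp add: Am_def)
      show "G z $$ (i, b) * qfactor q N Am z 0 $$ (b, a) = gg b z i * (if b = a then 1 else 0) - c * (U a (gg b) * gg b z i)"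
        unfolding qe using b ia by (simp add: G_def right_diff_distrib)
    qed
    also have "\<dots> = gg a z i - c * (\<Sum>b<N. U a (gg b) * gg b z i)"
    proof -
      have "(\<Sum>b<N. gg b z i * (if b = a then 1 else 0) - c * (U a (gg b) * gg b z i))
          = (\<Sum>b<N. gg b z i * (if b = a then 1 else 0)) - (\<Sum>b<N. c * (U a (gg b) * gg b z i))"
        by (rule sum_subtractf)
      also have "(\<Sum>b<N. gg b z i * (if b = a then 1 else 0)) = (\<Sum>b<N. if b = a then gg b z i else 0)"
        by (intro sum.cong refl) auto
      also have "\<dots> = gg a z i" using ia by (simp add: sum.delta)
      finally show ?thesis by (simp add: sum_distrib_left)
    qed
    also have "\<dots> = G (of_real q * z) $$ (i, a)" using key ia by (simp add: G_def)
    finally show "G (of_real q * z) $$ (i, a) = (G z * qfactor q N Am z 0) $$ (i, a)" by simp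
  qed (use Am in \<open>auto simp: qfactor_def G_def\<close>)
  define \<epsilon> where "\<epsilon> = min r (1 / (2 * (mnorm Am + 1)))"
  have a0: "mnorm Am \<ge> 0" by (rule mnorm_ge0)
  have e0: "\<epsilon> > 0" "\<epsilon> \<le> r" using r a0 by (auto simp: \<epsilon>_def)
  have small: "cmod z * mnorm Am \<le> 1/2" if "z \<in> ball (0::complex) \<epsilon>" for z
  proof -
    have "cmod z \<le> 1 / (2 * (mnorm Am + 1))" using that by (auto simp: \<epsilon>_def)
    hence "cmod z * mnorm Am \<le> 1 / (2 * (mnorm Am + 1)) * mnorm Am" using a0 by (intro mult_right_mono) auto
    also have "\<dots> \<le> 1/2" using a0 by (simp add: field_simps)
    finally show ?thesis .
  qed
  have iter: "\<forall>z\<in>ball 0 \<epsilon>. G z = G (of_real q ^ k * z) * qpartial q N Am z k" for k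
  proof (induction k)
    case 0 show ?case using right_mult_one_mat[OF Gc] by (simp add: qpartial_def)
  next
    case (Suc k)
    show ?case
    proof
      fix z :: complex assume zin: "z \<in> ball 0 \<epsilon>"
      let ?zq = "complex_of_real q * z"
      have zqin: "?zq \<in> ball 0 \<epsilon>" by (rule qball[OF zin q])
      have zr: "z \<in> ball 0 r" using zin e0 by auto
      note fz = qfactor_props[OF Am q small[OF zin], of 0]
      have Qc: "qpartial q N Am ?zq k \<in> carrier_mat N N"
        by (rule qpartial_carrier) (use qfactor_props(3)[OF Am q small[OF zqin]] in auto)
      let ?M = "minv (qfactor q N Am z 0)"
      let ?Q = "qpartial q N Am ?zq k"
      have IH: "G ?zq = G (of_real q ^ k * ?zq) * ?Q" using Suc zqin by blast
      have Gz: "G z = G ?zq * ?M"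
      proof -
        have "G ?zq * ?M = (G z * qfactor q N Am z 0) * ?M" unfolding Gq[OF zr] ..
        also have "\<dots> = G z * (qfactor q N Am z 0 * ?M)" by (rule assoc_mult_mat[OF Gc fz(4) fz(3)])
        also have "\<dots> = G z" using fz(1) Gc[of z] by simp
        finally show ?thesis by simp
      qed
      have QA: "?Q * Am = Am * ?Q" by (rule qpartial_comm[OF Am q small[OF zqin]])
      have QF: "?Q * qfactor q N Am z 0 = qfactor q N Am z 0 * ?Q" by (rule comm_qfactor[OF Am Qc QA])
      have QM: "?Q * ?M = ?M * ?Q" by (rule comm_minv[OF fz(4) fz(3) fz(1) fz(2) Qc QF])
      have pw: "complex_of_real q ^ k * ?zq = complex_of_real q ^ Suc k * z" by simp
      have "G z = (G (of_real q ^ k * ?zq) * ?Q) * ?M" unfolding Gz IH ..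
      also have "\<dots> = G (of_real q ^ k * ?zq) * (?Q * ?M)" by (rule assoc_mult_mat[OF Gc Qc fz(3)])
      also have "\<dots> = G (of_real q ^ k * ?zq) * (?M * ?Q)" unfolding QM ..
      also have "\<dots> = G (of_real q ^ Suc k * z) * qpartial q N Am z (Suc k)"
        unfolding pw qpartial_Suc_left ..
      finally show "G z = G (of_real q ^ Suc k * z) * qpartial q N Am z (Suc k)" .
    qed
  qed
  have lim: "G z = Cm * P" if zin: "z \<in> ball 0 \<epsilon>" and P: "qprod_converges_to q N Am z P" for z P
  proof -
    have Pc: "P \<in> carrier_mat N N" using P by (simp add: qprod_converges_to_def)
    have Qc: "qpartial q N Am z k \<in> carrier_mat N N" for k
      by (rule qpartial_carrier) (use qfactor_props(3)[OF Am q small[OF zin]] in auto)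
    have pz: "(\<lambda>k. complex_of_real q ^ k * z) \<longlonglongrightarrow> 0"
    proof -
      have "(\<lambda>k. complex_of_real q ^ k) \<longlonglongrightarrow> 0" using q by (intro LIMSEQ_power_zero) simp
      thus ?thesis using tendsto_mult_left_zero by blast
    qed
    have gc: "(\<lambda>k. gg a (complex_of_real q ^ k * z) i) \<longlonglongrightarrow> gg a 0 i" if "a < N" "i < n" for a i
    proof -
      have "isCont (\<lambda>w. gg a w i) 0"
        using holomorphic_on_imp_continuous_on[OF hol[OF that]] e0
        by (simp add: continuous_on_eq_continuous_at[OF open_ball])
      from isCont_tendsto_compose[OF this pz] show ?thesis .
    qed
    show ?thesis
    proof (rule eq_matI)
      fix i l assume "i < dim_row (Cm * P)" "l < dim_col (Cm * P)"
      hence il: "i < n" "l < N" using Cm Pc by auto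
      have "(\<lambda>k. (G (of_real q ^ k * z) * qpartial q N Am z k) $$ (i, l)) =
            (\<lambda>k. \<Sum>a<N. gg a (of_real q ^ k * z) i * qpartial q N Am z k $$ (a, l))"
        by (rule ext, subst mult_entry[OF Gc Qc il]) (use il in \<open>auto simp: G_def intro!: sum.cong\<close>)
      moreover have "(\<lambda>k. \<Sum>a<N. gg a (of_real q ^ k * z) i * qpartial q N Am z k $$ (a, l))
          \<longlonglongrightarrow> (\<Sum>a<N. gg a 0 i * P $$ (a, l))"
        using P il gc unfolding qprod_converges_to_def by (auto intro!: tendsto_sum tendsto_mult)
      moreover have "(\<lambda>k. (G (of_real q ^ k * z) * qpartial q N Am z k) $$ (i, l)) = (\<lambda>k. G z $$ (i, l))"
        using iter zin by simp
      ultimately have "(\<lambda>k. G z $$ (i, l)) \<longlonglongrightarrow> (\<Sum>a<N. gg a 0 i * P $$ (a, l))" by simp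
      hence "G z $$ (i, l) = (\<Sum>a<N. gg a 0 i * P $$ (a, l))" by (simp add: LIMSEQ_const_iff)
      also have "\<dots> = (Cm * P) $$ (i, l)"
        by (subst mult_entry[OF Cm Pc il]) (use il in \<open>auto simp: Cm_def intro!: sum.cong\<close>)
      finally show "G z $$ (i, l) = (Cm * P) $$ (i, l)" .
    qed (use Gc[of z] Cm Pc in auto)
  qed
  show ?thesis
  proof (intro exI conjI)
    show "Cm \<in> carrier_mat n N" "Am \<in> carrier_mat N N" "Bm \<in> carrier_mat N m" by (fact Cm Am Bm)+
    show "\<epsilon> > 0" "\<epsilon> \<le> r" by (fact e0)+
    show "\<forall>z\<in>ball 0 \<epsilon>. \<exists>P. qprod_converges_to q N Am z P \<and> T z = Cm * P * Bm"
    proof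
      fix z :: complex assume zin: "z \<in> ball 0 \<epsilon>"
      obtain P where P: "qprod_converges_to q N Am z P" using qprod_conv[OF Am q small[OF zin]] by blast
      have "T z = G z * Bm" using TG zin e0 by auto
      also have "\<dots> = Cm * P * Bm" using lim[OF zin P] by simp
      finally show "\<exists>P. qprod_converges_to q N Am z P \<and> T z = Cm * P * Bm" using P by blast
    qed
  qed
qed

theorem theorem4p2:
  fixes q r :: real and n m :: nat and T :: "complex \<Rightarrow> complex mat"
  assumes q: "0 \<le> q" "q < 1"
    and r: "r > 0"
    and dims: "\<forall>z\<in>ball 0 r. T z \<in> carrier_mat n m"
    and analytic: "\<forall>i<n. \<forall>j<m. (\<lambda>z. T z $$ (i, j)) holomorphic_on ball 0 r"
  shows "Rq_cyclic q r n m T \<longleftrightarrow>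
    (\<exists>N::nat. \<exists>C A B. C \<in> carrier_mat n N \<and> A \<in> carrier_mat N N \<and> B \<in> carrier_mat N m \<and>
      (\<exists>\<epsilon>>0. \<epsilon> \<le> r \<and> (\<forall>z\<in>ball 0 \<epsilon>. \<exists>P. qprod_converges_to q N A z P \<and> T z = C * P * B)))"
proof
  assume "Rq_cyclic q r n m T"
  thus "\<exists>N::nat. \<exists>C A B. C \<in> carrier_mat n N \<and> A \<in> carrier_mat N N \<and> B \<in> carrier_mat N m \<and>
      (\<exists>\<epsilon>>0. \<epsilon> \<le> r \<and> (\<forall>z\<in>ball 0 \<epsilon>. \<exists>P. qprod_converges_to q N A z P \<and> T z = C * P * B))"
    by (rule forward[OF q r dims analytic])
next
  assume "\<exists>N::nat. \<exists>C A B. C \<in> carrier_mat n N \<and> A \<in> carrier_mat N N \<and> B \<in> carrier_mat N m \<and>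
      (\<exists>\<epsilon>>0. \<epsilon> \<le> r \<and> (\<forall>z\<in>ball 0 \<epsilon>. \<exists>P. qprod_converges_to q N A z P \<and> T z = C * P * B))"
  then obtain N C A B \<epsilon> where *: "C \<in> carrier_mat n N" "A \<in> carrier_mat N N" "B \<in> carrier_mat N m"
    "\<epsilon> > 0" "\<epsilon> \<le> r" "\<forall>z\<in>ball 0 \<epsilon>. \<exists>P. qprod_converges_to q N A z P \<and> T z = C * P * B"
    by blast
  show "Rq_cyclic q r n m T" by (rule backward[OF q r analytic *])
qed

end
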